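(* Let $A\colon[0,\infty)\to\mathbb R^{n\times n}$ be continuous and suppose $x'=A(t)x$ has an exponential dichotomy on $[0,\infty)$ with constants $N,\lambda>0$. Let $f\colon[0,\infty)\times\mathbb R^n\to\mathbb R^n$ be continuously differentiable with $$|f_x(t,x)|\le L_1+L_2|x|+L_3|x|^2+\dots+L_{k+1}|x|^k\quad\text{for all }t\ge0,\ x\in\mathbb R^n,$$ where $k\in\mathbb N$, $L_j\ge0$ for $j=1,\dots,k+1$, and $L_1<\lambda/(2N)$. Then for every $\rho>0$ with $L_1+L_2\rho+\dots+L_{k+1}\rho^k<\lambda/(2N)$, the equation $x'=A(t)x+f(t,x)$ has the conditional Lipschitz shadowing property in $B_\rho(0)$.
   Context: $|\cdot|$ is a fixed norm on $\mathbb R^n$ and the induced matrix norm; $B_r(x)=\{y:|y-x|\le r\}$; $f_x$ is the partial derivative of $f$ with respect to $x$. For continuous $g\colon[0,\infty)\times\mathbb R^n\to\mathbb R^n$ and $\tau\in(0,\infty]$, a pseudosolution of $x'=g(t,x)$ on $[0,\tau)$ is a $C^1$ map $y\colon[0,\tau)\to\mathbb R^n$ with $\sigma_y:=\sup_{0\le t<\tau}|y'(t)-g(t,y(t))|<\infty$. The equation has the conditional Lipschitz shadowing property in $H\neq\emptyset$ if there exist $\varepsilon_0,\kappa>0$ such that whenever $0<\varepsilon\le\varepsilon_0$ and $y$ is a pseudosolution on $[0,\tau)$ ($\tau\in(0,\infty]$) with $\sigma_y\le\varepsilon$ and $y(t)\in H$ for all $t\in[0,\tau)$, there is a solution $x$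 on $[0,\tau)$ with $\sup_{0\le t<\tau}|x(t)-y(t)|\le\kappa\varepsilon$. With $T(t,s)$ the transition matrix of $x'=A(t)x$: an exponential dichotomy on $[0,\infty)$ consists of projections $P(t)$ and constants $N,\lambda>0$ with $P(t)T(t,s)=T(t,s)P(s)$, $|T(t,s)P(s)|\le Ne^{-\lambda(t-s)}$ for $t\ge s\ge0$, and $|T(t,s)(I-P(s))|\le Ne^{-\lambda(s-t)}$ for $0\le t\le s$. *)

theory Defs
  imports "HOL-Analysis.Analysis"
begin

definition is_norm :: "(real^'n \<Rightarrow> real) \<Rightarrow> bool" where
  "is_norm nrm \<longleftrightarrow>
     (\<forall>x. nrm x = 0 \<longleftrightarrow> x = 0) \<and>
     (\<forall>x y. nrm (x + y) \<le> nrm x + nrm y) \<and>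
     (\<forall>c x. nrm (c *\<^sub>R x) = \<bar>c\<bar> * nrm x)"

definition mat_norm :: "(real^'n \<Rightarrow> real) \<Rightarrow> real^'n^'n \<Rightarrow> real" where
  "mat_norm nrm M = (SUP x\<in>{x. nrm x \<le> 1}. nrm (M *v x))"

definition Ivl :: "ereal \<Rightarrow> real set" where
  "Ivl \<tau> = {t. 0 \<le> t \<and> ereal t < \<tau>}"

definition transition_matrix ::
  "(real \<Rightarrow> real^'n^'n) \<Rightarrow> (real \<Rightarrow> real \<Rightarrow> real^'n^'n) \<Rightarrow> bool" where
  "transition_matrix A T \<longleftrightarrow>
     (\<forall>s\<ge>0. T s s = mat 1 \<and>
        (\<forall>t\<ge>0. ((\<lambda>\<tau>. T \<tau> s) has_vector_derivative (A t ** T t s)) (at t within {0..})))"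

definition exp_dichotomy ::
  "(real^'n \<Rightarrow> real) \<Rightarrow> (real \<Rightarrow> real^'n^'n) \<Rightarrow> real \<Rightarrow> real \<Rightarrow> bool" where
  "exp_dichotomy nrm A N lam \<longleftrightarrow>
     (\<exists>T P. transition_matrix A T \<and>
        (\<forall>t\<ge>0. P t ** P t = P t) \<and>
        (\<forall>t s. 0 \<le> t \<and> 0 \<le> s \<longrightarrow> P t ** T t s = T t s ** P s) \<and>
        (\<forall>t s. 0 \<le> s \<and> s \<le> t \<longrightarrow> mat_norm nrm (T t s ** P s) \<le> N * exp (- lam * (t - s))) \<and>
        (\<forall>t s. 0 \<le> t \<and> t \<le> s \<longrightarrow>
            mat_norm nrm (T t s ** (mat 1 - P s)) \<le> N * exp (- lam * (s - t))))"

definition pseudosolution ::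
  "(real^'n \<Rightarrow> real) \<Rightarrow> (real \<Rightarrow> real^'n \<Rightarrow> real^'n) \<Rightarrow> ereal \<Rightarrow> (real \<Rightarrow> real^'n) \<Rightarrow> real \<Rightarrow> bool" where
  "pseudosolution nrm g \<tau> y eps \<longleftrightarrow>
     (\<exists>y'. (\<forall>t\<in>Ivl \<tau>. (y has_vector_derivative y' t) (at t within Ivl \<tau>)) \<and>
           continuous_on (Ivl \<tau>) y' \<and>
           (\<forall>t\<in>Ivl \<tau>. nrm (y' t - g t (y t)) \<le> eps))"

definition is_solution ::
  "(real \<Rightarrow> real^'n \<Rightarrow> real^'n) \<Rightarrow> ereal \<Rightarrow> (real \<Rightarrow> real^'n) \<Rightarrow> bool" where
  "is_solution g \<tau> x \<longleftrightarrow>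
     (\<forall>t\<in>Ivl \<tau>. (x has_vector_derivative g t (x t)) (at t within Ivl \<tau>))"

definition cond_lip_shadowing ::
  "(real^'n \<Rightarrow> real) \<Rightarrow> (real \<Rightarrow> real^'n \<Rightarrow> real^'n) \<Rightarrow> (real^'n) set \<Rightarrow> bool" where
  "cond_lip_shadowing nrm g H \<longleftrightarrow>
     (\<exists>eps0>0. \<exists>\<kappa>>0. \<forall>eps \<tau> y.
        0 < eps \<and> eps \<le> eps0 \<and> \<tau> > 0 \<and> pseudosolution nrm g \<tau> y eps \<and>
        (\<forall>t\<in>Ivl \<tau>. y t \<in> H) \<longrightarrow>
        (\<exists>x. is_solution g \<tau> x \<and> (\<forall>t\<in>Ivl \<tau>. nrm (x t - y t) \<le> \<kappa> * eps)))"

definition C1_with_partials ::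
  "(real \<Rightarrow> real^'n \<Rightarrow> real^'n) \<Rightarrow> (real \<Rightarrow> real^'n \<Rightarrow> real^'n) \<Rightarrow> (real \<Rightarrow> real^'n \<Rightarrow> real^'n^'n) \<Rightarrow> bool" where
  "C1_with_partials f ft fx \<longleftrightarrow>
     (\<forall>t\<ge>0. \<forall>x. ((\<lambda>p. f (fst p) (snd p)) has_derivative
                    (\<lambda>h. fst h *\<^sub>R ft t x + fx t x *v snd h)) (at (t, x) within {0..} \<times> UNIV)) \<and>
     continuous_on ({0..} \<times> UNIV) (\<lambda>p. ft (fst p) (snd p)) \<and>
     continuous_on ({0..} \<times> UNIV) (\<lambda>p. fx (fst p) (snd p))"

end

theory Submission
  imports Defs
begin


locale nrmloc =
  fixes nrm :: "real^'n \<Rightarrow> real"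
  assumes isn: "is_norm nrm"
begin

lemma nrm_eq0: "nrm x = 0 \<longleftrightarrow> x = 0" using isn unfolding is_norm_def by simp
lemma nrm_tri: "nrm (x + y) \<le> nrm x + nrm y" using isn unfolding is_norm_def by simp
lemma nrm_scale: "nrm (c *\<^sub>R x) = \<bar>c\<bar> * nrm x" using isn unfolding is_norm_def by simp
lemma nrm_0[simp]: "nrm 0 = 0" using nrm_eq0 by simp
lemma nrm_neg[simp]: "nrm (- x) = nrm x" using nrm_scale[of "-1" x] by simp
lemma nrm_nonneg[simp]: "0 \<le> nrm x"
proof -
  have "nrm (x + - x) \<le> nrm x + nrm (-x)" by (rule nrm_tri)
  then show ?thesis by simp
qed
lemma nrm_pos: "x \<noteq> 0 \<Longrightarrow> 0 < nrm x" using nrm_eq0[of x] nrm_nonneg[of x] by linarith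
lemma nrm_minus_comm: "nrm (x - y) = nrm (y - x)"
  using nrm_neg[of "x - y"] by simp
lemma nrm_tri_diff: "nrm (x - z) \<le> nrm (x - y) + nrm (y - z)"
  using nrm_tri[of "x - y" "y - z"] by simp
lemma nrm_diff_ge: "nrm x - nrm y \<le> nrm (x - y)"
  using nrm_tri[of "x - y" y] by simp
lemma nrm_tri_diff2: "nrm (x - y) \<le> nrm x + nrm y"
  using nrm_tri[of x "- y"] by simp

lemma nrm_sum: "finite S \<Longrightarrow> nrm (sum f S) \<le> (\<Sum>i\<in>S. nrm (f i))"
proof (induction S rule: finite_induct)
  case empty then show ?case by simp
next
  case (insert a S)
  then show ?case using nrm_tri[of "f a" "sum f S"] by simp
qed

lemma nrm_upper: "\<exists>c>0. \<forall>x. nrm x \<le> c * norm x"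
proof -
  define c where "c = 1 + (\<Sum>b\<in>(Basis::(real^'n) set). nrm b)"
  have c0: "c > 0" unfolding c_def using sum_nonneg[of Basis nrm] nrm_nonneg by (smt (verit))
  have "nrm x \<le> c * norm x" for x
  proof -
    have "nrm x = nrm (\<Sum>b\<in>Basis. (x \<bullet> b) *\<^sub>R b)" by (simp add: euclidean_representation)
    also have "\<dots> \<le> (\<Sum>b\<in>Basis. nrm ((x \<bullet> b) *\<^sub>R b))" by (rule nrm_sum) simp
    also have "\<dots> = (\<Sum>b\<in>Basis. \<bar>x \<bullet> b\<bar> * nrm b)" by (simp add: nrm_scale)
    also have "\<dots> \<le> (\<Sum>b\<in>(Basis::(real^'n) set). norm x * nrm b)"
      by (intro sum_mono mult_right_mono) (auto simp: Basis_le_norm)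
    also have "\<dots> = norm x * (\<Sum>b\<in>(Basis::(real^'n) set). nrm b)" by (simp add: sum_distrib_left)
    also have "\<dots> \<le> c * norm x" unfolding c_def by (simp add: algebra_simps)
    finally show ?thesis .
  qed
  with c0 show ?thesis by blast
qed

lemma nrm_lipschitz: "\<exists>c>0. \<forall>x y. \<bar>nrm x - nrm y\<bar> \<le> c * norm (x - y)"
proof -
  obtain c where c: "c > 0" "\<forall>x. nrm x \<le> c * norm x" using nrm_upper by blast
  have "\<bar>nrm x - nrm y\<bar> \<le> c * norm (x - y)" for x y
    using nrm_diff_ge[of x y] nrm_diff_ge[of y x] c(2)[rule_format, of "x - y"] c(2)[rule_format, of "y - x"]
    by (simp add: norm_minus_commute)
  with c show ?thesis by blast
qed

lemma nrm_continuous: "continuous_on S nrm"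
proof -
  obtain c where c: "c > 0" "\<forall>x y. \<bar>nrm x - nrm y\<bar> \<le> c * norm (x - y)" using nrm_lipschitz by blast
  show ?thesis unfolding continuous_on_iff
  proof (intro ballI allI impI)
    fix x and e :: real assume "e > 0"
    show "\<exists>d>0. \<forall>x'\<in>S. dist x' x < d \<longrightarrow> dist (nrm x') (nrm x) < e"
    proof (intro exI[of _ "e / c"] conjI ballI impI)
      show "e / c > 0" using \<open>e>0\<close> c by simp
      fix x' assume "dist x' x < e / c"
      then have "c * norm (x' - x) < e" using c(1) by (simp add: dist_norm field_simps)
      then show "dist (nrm x') (nrm x) < e" using c(2)[rule_format, of x' x] by (simp add: dist_real_def)
    qed
  qed
qed

lemma nrm_lower: "\<exists>c>0. \<forall>x. norm x \<le> c * nrm x"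
proof -
  have ne: "sphere (0::real^'n) 1 \<noteq> {}"
  proof -
    obtain b :: "real^'n" where "b \<in> Basis" using nonempty_Basis by blast
    then have "norm b = 1" by simp
    then show ?thesis by auto
  qed
  obtain u where u: "u \<in> sphere 0 1" "\<forall>y\<in>sphere 0 1. nrm u \<le> nrm y"
    using continuous_attains_inf[OF compact_sphere ne nrm_continuous] by blast
  have u0: "u \<noteq> 0" using u(1) by auto
  define m where "m = nrm u"
  have m0: "m > 0" unfolding m_def using nrm_pos[OF u0] .
  have "norm x \<le> (1/m) * nrm x" for x
  proof (cases "x = 0")
    case True then show ?thesis by simp
  next
    case False
    then have nx: "norm x > 0" by simp
    have "(1 / norm x) *\<^sub>R x \<in> sphere 0 1" using nx by simp
    then have "m \<le> nrm ((1 / norm x) *\<^sub>R x)" using u(2) unfolding m_def by blast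
    also have "\<dots> = nrm x / norm x" using nx by (simp add: nrm_scale)
    finally have "m * norm x \<le> nrm x" using nx by (simp add: field_simps)
    then show ?thesis using m0 by (simp add: field_simps)
  qed
  then show ?thesis using m0 by (intro exI[of _ "1/m"]) auto
qed

lemma mat_bdd: "bdd_above ((\<lambda>x. nrm (M *v x)) ` {x. nrm x \<le> 1})"
proof -
  obtain c2 where c2: "c2 > 0" "\<forall>x. nrm x \<le> c2 * norm x" using nrm_upper by blast
  obtain c1 where c1: "c1 > 0" "\<forall>x. norm x \<le> c1 * nrm x" using nrm_lower by blast
  obtain K where K: "\<And>x. norm (M *v x) \<le> norm x * K"
    using bounded_linear.bounded[OF matrix_vector_mul_bounded_linear[of M]] by blast
  have "nrm (M *v x) \<le> c2 * (c1 * \<bar>K\<bar>)" if "nrm x \<le> 1" for x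
  proof -
    have "nrm (M *v x) \<le> c2 * norm (M *v x)" using c2 by blast
    also have "\<dots> \<le> c2 * (norm x * \<bar>K\<bar>)"
      using order_trans[OF K[of x] mult_left_mono[OF abs_ge_self norm_ge_zero]] c2(1) by (intro mult_left_mono) auto
    also have "\<dots> \<le> c2 * (c1 * \<bar>K\<bar>)"
    proof -
      have "c1 * nrm x \<le> c1 * 1" using that c1(1) by (intro mult_left_mono) auto
      then have "norm x \<le> c1" using c1(2)[rule_format, of x] by simp
      then show ?thesis using c2(1) by (intro mult_left_mono mult_right_mono) auto
    qed
    finally show ?thesis .
  qed
  then show ?thesis by (auto intro!: bdd_aboveI)
qed

lemma mat_norm_nonneg: "0 \<le> mat_norm nrm M"
proof -
  have "nrm (M *v 0) \<le> mat_norm nrm M" unfolding mat_norm_def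
    by (rule cSUP_upper[OF _ mat_bdd]) simp
  then show ?thesis by simp
qed

lemma mat_norm_bound: "nrm (M *v x) \<le> mat_norm nrm M * nrm x"
proof (cases "x = 0")
  case True then show ?thesis by simp
next
  case False
  then have p: "nrm x > 0" by (rule nrm_pos)
  define u where "u = (1 / nrm x) *\<^sub>R x"
  have "nrm u = 1" unfolding u_def using p by (simp add: nrm_scale)
  then have "nrm (M *v u) \<le> mat_norm nrm M" unfolding mat_norm_def
    by (intro cSUP_upper[OF _ mat_bdd]) simp
  moreover have "M *v x = nrm x *\<^sub>R (M *v u)" unfolding u_def using p
    by (simp add: matrix_vector_mult_scaleR)
  ultimately show ?thesis using p by (simp add: nrm_scale mult.commute)
qed

lemma dual_functional: "\<exists>a. (\<forall>x. a \<bullet> x \<le> nrm x) \<and> a \<bullet> v = nrm v"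
proof (cases "v = 0")
  case True then show ?thesis by (intro exI[of _ 0]) simp
next
  case False
  then have pv: "nrm v > 0" by (rule nrm_pos)
  define S where "S = {x. nrm x \<le> 1}"
  define w where "w = (1 / nrm v) *\<^sub>R v"
  have nw: "nrm w = 1" unfolding w_def using pv by (simp add: nrm_scale)
  have cvx: "convex S" unfolding S_def convex_def
  proof (intro ballI allI impI)
    fix x y and u v :: real assume xy: "x \<in> {x. nrm x \<le> 1}" "y \<in> {x. nrm x \<le> 1}" and uv: "0 \<le> u" "0 \<le> v" "u + v = 1"
    have "nrm (u *\<^sub>R x + v *\<^sub>R y) \<le> u * nrm x + v * nrm y"
      using nrm_tri[of "u *\<^sub>R x" "v *\<^sub>R y"] uv by (simp add: nrm_scale)
    also have "\<dots> \<le> u * 1 + v * 1" using xy uv by (intro add_mono mult_left_mono) auto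
    finally show "u *\<^sub>R x + v *\<^sub>R y \<in> {x. nrm x \<le> 1}" using uv by simp
  qed
  have wS: "w \<in> S" unfolding S_def using nw by simp
  have 0: "0 \<in> S" unfolding S_def by simp
  have "w \<notin> rel_interior S"
  proof
    assume "w \<in> rel_interior S"
    then obtain e where e: "e > 0" "ball w e \<inter> affine hull S \<subseteq> S"
      unfolding mem_rel_interior_ball by blast
    have "w \<noteq> 0" using nw by auto
    then have wn: "norm w > 0" by simp
    define t where "t = e / (2 * norm w)"
    have t0: "t > 0" unfolding t_def using e wn by simp
    have aff: "\<forall>x\<in>affine hull S. \<forall>y\<in>affine hull S. \<forall>u v. u + v = 1 \<longrightarrow> u *\<^sub>R x + v *\<^sub>R y \<in> affine hull S"
      using affine_affine_hull[of S] unfolding affine_def .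
    have "(1 + t) *\<^sub>R w + (- t) *\<^sub>R 0 \<in> affine hull S"
      using aff[rule_format, OF hull_inc[OF wS] hull_inc[OF 0], of "1 + t" "- t"] by simp
    then have h: "(1 + t) *\<^sub>R w \<in> affine hull S" by simp
    have eq: "w - (1 + t) *\<^sub>R w = - (t *\<^sub>R w)" by (simp add: algebra_simps)
    have "dist w ((1 + t) *\<^sub>R w) = t * norm w" unfolding dist_norm eq using t0 by simp
    also have "t * norm w = e / 2" unfolding t_def using wn by simp
    also have "e / 2 < e" using e by simp
    finally have "(1 + t) *\<^sub>R w \<in> ball w e" by simp
    with e(2) h have "(1 + t) *\<^sub>R w \<in> S" by blast
    then show False unfolding S_def using t0 nw by (simp add: nrm_scale)
  qed
  then obtain a where a: "a \<noteq> 0" "\<And>y. y \<in> closure S \<Longrightarrow> a \<bullet> w \<le> a \<bullet> y"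
    "\<And>y. y \<in> rel_interior S \<Longrightarrow> a \<bullet> w < a \<bullet> y"
    by (rule supporting_hyperplane_relative_frontier[OF cvx closure_subset[THEN subsetD, OF wS]]) auto
  define b where "b = - a"
  have b: "\<And>y. y \<in> S \<Longrightarrow> b \<bullet> y \<le> b \<bullet> w" unfolding b_def using a(2) closure_subset by fastforce
  have bx: "b \<bullet> x \<le> nrm x * (b \<bullet> w)" for x
  proof (cases "x = 0")
    case True then show ?thesis using b[OF 0] by simp
  next
    case False
    then have px: "nrm x > 0" by (rule nrm_pos)
    have "(1 / nrm x) *\<^sub>R x \<in> S" unfolding S_def using px by (simp add: nrm_scale)
    then have "b \<bullet> ((1 / nrm x) *\<^sub>R x) \<le> b \<bullet> w" by (rule b)
    then show ?thesis using px by (simp add: field_simps)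
  qed
  have bw: "b \<bullet> w > 0"
  proof (rule ccontr)
    assume "\<not> b \<bullet> w > 0"
    then have "b \<bullet> x \<le> 0" for x using bx[of x] mult_nonneg_nonpos[OF nrm_nonneg[of x], of "b \<bullet> w"] by linarith
    then have "b \<bullet> b \<le> 0" by blast
    then have "b = 0" by (metis inner_gt_zero_iff linorder_not_le)
    then show False using a(1) unfolding b_def by simp
  qed
  define c where "c = (1 / (b \<bullet> w)) *\<^sub>R b"
  have "c \<bullet> x \<le> nrm x" for x using bx[of x] bw unfolding c_def by (simp add: field_simps)
  moreover have "c \<bullet> v = nrm v" unfolding c_def using bw pv
    by (simp add: w_def field_simps)
  ultimately show ?thesis by blast
qed

lemma nrm_integral_le:
  fixes g :: "real \<Rightarrow> real^'n"
  assumes "g integrable_on S" "b integrable_on S" "\<And>s. s \<in> S \<Longrightarrow> nrm (g s) \<le> b s"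
  shows "nrm (integral S g) \<le> integral S b"
proof -
  obtain a where a: "\<forall>x. a \<bullet> x \<le> nrm x" "a \<bullet> integral S g = nrm (integral S g)"
    using dual_functional by blast
  have "a \<bullet> integral S g = integral S (\<lambda>s. a \<bullet> g s)"
    using integral_linear[OF assms(1) bounded_linear_inner_right[of a]] by (simp add: o_def)
  also have "\<dots> \<le> integral S b"
  proof (rule integral_le)
    show "(\<lambda>s. a \<bullet> g s) integrable_on S"
      using integrable_linear[OF assms(1) bounded_linear_inner_right[of a]] by (simp add: o_def)
    show "b integrable_on S" by fact
    show "a \<bullet> g s \<le> b s" if "s \<in> S" for s using a(1) assms(3)[OF that] by (meson order_trans)
  qed
  finally show ?thesis using a(2) by simp
qed

end


lemma bilinear_mv: "bounded_bilinear (\<lambda>(M::real^'n^'m) (v::real^'n). M *v v)"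
proof -
  have "bilinear (\<lambda>(M::real^'n^'m) (v::real^'n). M *v v)"
    unfolding bilinear_def
  proof (intro conjI allI)
    show "linear ((*v) M)" for M :: "real^'n^'m" by (rule matrix_vector_mul_linear)
    show "linear (\<lambda>M::real^'n^'m. M *v y)" for y :: "real^'n"
      unfolding linear_iff by (simp add: matrix_vector_mult_add_rdistrib scaleR_matrix_vector_assoc)
  qed
  then show ?thesis by (simp add: bilinear_conv_bounded_bilinear)
qed

lemma at_within_Ici_pos: "(t::real) > 0 \<Longrightarrow> at t within {0..} = at t"
  by (rule at_within_interior) simp

lemma lin_uniq:
  fixes A :: "real \<Rightarrow> real^'n^'n" and x :: "real \<Rightarrow> real^'n"
  assumes contA: "continuous_on {0..} A"
    and dx: "\<And>t. t \<ge> 0 \<Longrightarrow> (x has_vector_derivative A t *v x t) (at t within {0..})"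
    and r: "r \<ge> 0" "x r = 0" and t: "t \<ge> 0"
  shows "x t = 0"
proof -
  obtain K where K: "\<And>M v. norm ((M::real^'n^'n) *v v) \<le> norm M * norm v * K"
    using bounded_bilinear.bounded[OF bilinear_mv] by blast
  define b where "b = max r t"
  have "bounded (A ` {0..b})"
    by (intro compact_imp_bounded compact_continuous_image continuous_on_subset[OF contA]) auto
  then obtain B where B: "B > 0" "\<And>s. s \<in> {0..b} \<Longrightarrow> norm (A s) \<le> B"
    unfolding bounded_pos by blast
  define C where "C = 2 * B * \<bar>K\<bar> + 1"
  have "0 \<le> 2 * B * \<bar>K\<bar>" using B(1) by simp
  then have C: "C > 0" unfolding C_def by linarith
  define \<phi> where "\<phi> s = x s \<bullet> x s" for s
  define \<phi>' where "\<phi>' s = 2 * (x s \<bullet> (A s *v x s))" for s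
  have dphi: "(\<phi> has_real_derivative \<phi>' s) (at s)" if "s > 0" for s
  proof -
    have d: "(x has_derivative (\<lambda>h. h *\<^sub>R (A s *v x s))) (at s)"
      using dx[of s] that by (simp add: has_vector_derivative_def at_within_Ici_pos)
    have "(\<phi> has_derivative (\<lambda>h. x s \<bullet> (h *\<^sub>R (A s *v x s)) + (h *\<^sub>R (A s *v x s)) \<bullet> x s)) (at s)"
      unfolding \<phi>_def using has_derivative_inner[OF d d] by simp
    moreover have "(\<lambda>h. x s \<bullet> (h *\<^sub>R (A s *v x s)) + (h *\<^sub>R (A s *v x s)) \<bullet> x s) = (*) (\<phi>' s)"
      unfolding \<phi>'_def by (auto simp: algebra_simps inner_commute)
    ultimately show ?thesis by (simp add: has_field_derivative_def)
  qed
  have phi_bound: "\<bar>\<phi>' s\<bar> \<le> C * \<phi> s" if "s \<in> {0..b}" for s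
  proof -
    have "\<bar>\<phi>' s\<bar> \<le> 2 * (norm (x s) * norm (A s *v x s))"
      unfolding \<phi>'_def using Cauchy_Schwarz_ineq2[of "x s" "A s *v x s"] by simp
    also have "\<dots> \<le> 2 * (norm (x s) * (norm (A s) * norm (x s) * \<bar>K\<bar>))"
    proof -
      have "norm (A s) * norm (x s) * K \<le> norm (A s) * norm (x s) * \<bar>K\<bar>" by (intro mult_left_mono) auto
      then have "norm (A s *v x s) \<le> norm (A s) * norm (x s) * \<bar>K\<bar>" using K[of "A s" "x s"] by linarith
      then show ?thesis by (intro mult_left_mono) auto
    qed
    also have "\<dots> \<le> 2 * (norm (x s) * (B * norm (x s) * \<bar>K\<bar>))"
      using B(2)[OF that] by (intro mult_left_mono mult_right_mono) auto
    also have "\<dots> = (2 * B * \<bar>K\<bar>) * \<phi> s" unfolding \<phi>_def by (simp add: power2_norm_eq_inner[symmetric] power2_eq_square algebra_simps)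
    also have "\<dots> \<le> C * \<phi> s" unfolding C_def \<phi>_def by (simp add: algebra_simps)
    finally show ?thesis .
  qed
  have contphi: "continuous_on {0..} \<phi>"
  proof -
    have "continuous_on {0..} x"
      unfolding continuous_on_eq_continuous_within using dx has_vector_derivative_continuous by (metis atLeast_iff)
    then show ?thesis unfolding \<phi>_def by (intro continuous_intros)
  qed
  have phinn: "\<phi> s \<ge> 0" for s unfolding \<phi>_def by simp
  have phir: "\<phi> r = 0" unfolding \<phi>_def using r by simp
  have "\<phi> t \<le> 0"
  proof (cases "r < t")
    case True
    define \<psi> where "\<psi> s = exp (- C * s) * \<phi> s" for s
    have dpsi: "(\<psi> has_real_derivative exp (- C * s) * (\<phi>' s - C * \<phi> s)) (at s)" if "s > 0" for s
    proof -
      have e: "((\<lambda>s. exp (- C * s)) has_real_derivative exp (- C * s) * (- C)) (at s)"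
        by (auto intro!: derivative_eq_intros)
      show ?thesis unfolding \<psi>_def
        by (rule DERIV_cong[OF DERIV_mult[OF e dphi[OF that]]]) (simp add: algebra_simps)
    qed
    have "continuous_on {r..t} \<psi>" unfolding \<psi>_def
      using continuous_on_subset[OF contphi, of "{r..t}"] r by (auto intro!: continuous_intros)
    then obtain l z where lz: "r < z" "z < t" "(\<psi> has_real_derivative l) (at z)" "\<psi> t - \<psi> r = (t - r) * l"
    proof -
      have "\<And>z. r < z \<Longrightarrow> z < t \<Longrightarrow> \<psi> differentiable (at z)"
        unfolding real_differentiable_def proof -
        fix z assume "r < z" "z < t" then have "z > 0" using r by linarith
        then show "\<exists>D. (\<psi> has_real_derivative D) (at z)" using dpsi by blast
      qed
      from MVT[OF True \<open>continuous_on {r..t} \<psi>\<close> this] show ?thesis using that by blast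
    qed
    have "l = exp (- C * z) * (\<phi>' z - C * \<phi> z)" using DERIV_unique[OF lz(3) dpsi] lz r by simp
    moreover have "\<bar>\<phi>' z\<bar> \<le> C * \<phi> z" using phi_bound[of z] lz b_def r by auto
    then have "\<phi>' z - C * \<phi> z \<le> 0" by linarith
    ultimately have "l \<le> 0" by (simp add: mult_nonneg_nonpos)
    then have "\<psi> t \<le> \<psi> r" using lz(4) True by (smt (verit) mult_nonneg_nonpos)
    then have "exp (- C * t) * \<phi> t \<le> 0" unfolding \<psi>_def using phir by simp
    then show ?thesis by (simp add: mult_le_0_iff)
  next
    case False
    show ?thesis
    proof (cases "t = r")
      case True then show ?thesis using phir by simp
    next
      case False
      with \<open>\<not> r < t\<close> have tr: "t < r" by simp
      define \<psi> where "\<psi> s = exp (C * s) * \<phi> s" for s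
      have dpsi: "(\<psi> has_real_derivative exp (C * s) * (\<phi>' s + C * \<phi> s)) (at s)" if "s > 0" for s
      proof -
        have e: "((\<lambda>s. exp (C * s)) has_real_derivative exp (C * s) * C) (at s)"
          by (auto intro!: derivative_eq_intros)
        show ?thesis unfolding \<psi>_def
          by (rule DERIV_cong[OF DERIV_mult[OF e dphi[OF that]]]) (simp add: algebra_simps)
      qed
      have "continuous_on {t..r} \<psi>" unfolding \<psi>_def
        using continuous_on_subset[OF contphi, of "{t..r}"] t by (auto intro!: continuous_intros)
      then obtain l z where lz: "t < z" "z < r" "(\<psi> has_real_derivative l) (at z)" "\<psi> r - \<psi> t = (r - t) * l"
      proof -
        have "\<And>z. t < z \<Longrightarrow> z < r \<Longrightarrow> \<psi> differentiable (at z)"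
          unfolding real_differentiable_def proof -
          fix z assume "t < z" "z < r" then have "z > 0" using t by linarith
          then show "\<exists>D. (\<psi> has_real_derivative D) (at z)" using dpsi by blast
        qed
        from MVT[OF tr \<open>continuous_on {t..r} \<psi>\<close> this] show ?thesis using that by blast
      qed
      have "l = exp (C * z) * (\<phi>' z + C * \<phi> z)" using DERIV_unique[OF lz(3) dpsi] lz t by simp
      moreover have "\<bar>\<phi>' z\<bar> \<le> C * \<phi> z" using phi_bound[of z] lz t b_def by auto
      then have "- (\<phi>' z) \<le> C * \<phi> z" by linarith
      ultimately have "l \<ge> 0" by simp
      then have "\<psi> t \<le> \<psi> r" using lz(4) tr by (smt (verit) mult_nonneg_nonneg)
      then have "exp (C * t) * \<phi> t \<le> 0" unfolding \<psi>_def using phir by simp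
      then show ?thesis by (simp add: mult_le_0_iff)
    qed
  qed
  then have "\<phi> t = 0" using phinn[of t] by simp
  then show ?thesis unfolding \<phi>_def by simp
qed



lemma cont_det: fixes M :: "real \<Rightarrow> real^'n^'n" assumes "continuous_on S M"
  shows "continuous_on S (\<lambda>s. det (M s))"
  unfolding det_def using assms by (intro continuous_intros) (auto intro!: continuous_intros continuous_on_component)

lemma cont_inv:
  fixes M W :: "real \<Rightarrow> real^'n^'n"
  assumes cM: "continuous_on S M" and inv: "\<And>s. s \<in> S \<Longrightarrow> M s ** W s = mat 1"
  shows "continuous_on S W"
proof -
  have d0: "det (M s) \<noteq> 0" if "s \<in> S" for s
  proof -
    have "det (M s) * det (W s) = 1" using inv[OF that] det_mul[of "M s" "W s"] by simp
    then show ?thesis by auto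
  qed
  have eq: "W s = (\<chi> i j. det (\<chi> a c. if c = i then axis j 1 $ a else M s $ a $ c) / det (M s))"
    if "s \<in> S" for s
  proof -
    have "W s $ i $ j = det (\<chi> a c. if c = i then axis j 1 $ a else M s $ a $ c) / det (M s)" for i j
    proof -
      have "M s *v (W s *v axis j 1) = axis j 1"
        by (simp add: matrix_vector_mul_assoc inv[OF that])
      then have "W s *v axis j 1 = (\<chi> k. det (\<chi> a c. if c = k then axis j 1 $ a else M s $ a $ c) / det (M s))"
        using cramer[OF d0[OF that]] by blast
      then have "(W s *v axis j 1) $ i = det (\<chi> a c. if c = i then axis j 1 $ a else M s $ a $ c) / det (M s)"
        by simp
      moreover have "(W s *v axis j 1) $ i = W s $ i $ j"
        by (simp add: matrix_vector_mult_def axis_def if_distrib cong: if_cong)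
      ultimately show ?thesis by simp
    qed
    then show ?thesis by (simp add: vec_eq_iff)
  qed
  have cm: "continuous_on S (\<lambda>s. (\<chi> a c. if c = i then axis j 1 $ a else M s $ a $ c) :: real^'n^'n)" for i j
    apply (intro continuous_on_vec_lambda)
    subgoal for a c by (cases "c = i") (simp_all add: continuous_on_component[OF continuous_on_component[OF cM]])
    done
  have "continuous_on S (\<lambda>s. (\<chi> i j. det (\<chi> a c. if c = i then axis j 1 $ a else M s $ a $ c) / det (M s)) :: real^'n^'n)"
    by (intro continuous_on_vec_lambda continuous_on_divide cont_det cm cM) (use d0 in blast)
  then show ?thesis using eq by (simp cong: continuous_on_cong)
qed

locale dich = nrmloc nrm for nrm :: "real^'n \<Rightarrow> real" +
  fixes A :: "real \<Rightarrow> real^'n^'n" and N lam :: real and T :: "real \<Rightarrow> real \<Rightarrow> real^'n^'n"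
    and P :: "real \<Rightarrow> real^'n^'n"
  assumes contA: "continuous_on {0..} A" and Npos: "N > 0" and lampos: "lam > 0"
    and tm: "transition_matrix A T"
    and comm: "\<forall>t s. 0 \<le> t \<and> 0 \<le> s \<longrightarrow> P t ** T t s = T t s ** P s"
    and bP: "\<forall>t s. 0 \<le> s \<and> s \<le> t \<longrightarrow> mat_norm nrm (T t s ** P s) \<le> N * exp (- lam * (t - s))"
    and bQ: "\<forall>t s. 0 \<le> t \<and> t \<le> s \<longrightarrow> mat_norm nrm (T t s ** (mat 1 - P s)) \<le> N * exp (- lam * (s - t))"
begin

lemma TI: "s \<ge> 0 \<Longrightarrow> T s s = mat 1" using tm unfolding transition_matrix_def by blast

lemma dTm: "s \<ge> 0 \<Longrightarrow> t \<ge> 0 \<Longrightarrow> ((\<lambda>t. T t s) has_vector_derivative A t ** T t s) (at t within {0..})"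
  using tm unfolding transition_matrix_def by blast

lemma dTv: assumes "s \<ge> 0" "t \<ge> 0"
  shows "((\<lambda>t. T t s *v v) has_vector_derivative A t *v (T t s *v v)) (at t within {0..})"
proof -
  have bl: "bounded_linear (\<lambda>M::real^'n^'n. M *v v)"
    by (rule bounded_bilinear.bounded_linear_left[OF bilinear_mv])
  show ?thesis using bounded_linear.has_vector_derivative[OF bl dTm[OF assms]]
    by (simp add: matrix_vector_mul_assoc)
qed

lemma coc: assumes "t \<ge> 0" "r \<ge> 0" "s \<ge> 0" shows "T t s = T t r ** T r s"
proof -
  have "T t s *v v = (T t r ** T r s) *v v" for v
  proof -
    define x where "x t' = T t' s *v v - T t' r *v (T r s *v v)" for t'
    have "x t = 0"
    proof (rule lin_uniq[OF contA _ assms(2) _ assms(1)])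
      show "(x has_vector_derivative A t' *v x t') (at t' within {0..})" if "t' \<ge> 0" for t'
        unfolding x_def using has_vector_derivative_diff[OF dTv[OF assms(3) that, of v] dTv[OF assms(2) that, of "T r s *v v"]]
        by (simp add: matrix_vector_mult_diff_distrib)
      show "x r = 0" unfolding x_def using TI[OF assms(2)] by simp
    qed
    then show ?thesis unfolding x_def by (simp add: matrix_vector_mul_assoc)
  qed
  then show ?thesis by (rule matrix_eq[THEN iffD2, rule_format])
qed

definition "Phi t = T t 0"
definition "Psi t = T 0 t"
definition "P0 = P 0"
definition "Q0 = mat 1 - P 0"

lemma T_eq: "t \<ge> 0 \<Longrightarrow> s \<ge> 0 \<Longrightarrow> T t s = Phi t ** Psi s"
  unfolding Phi_def Psi_def by (rule coc) auto

lemma PhiPsi: "s \<ge> 0 \<Longrightarrow> Phi s ** Psi s = mat 1"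
  using T_eq[of s s] TI[of s] by simp

lemma PsiPhi: "s \<ge> 0 \<Longrightarrow> Psi s ** Phi s = mat 1"
  using T_eq[of 0 0] coc[of 0 s 0] TI[of 0] unfolding Phi_def Psi_def by simp

lemma Phi0: "Phi 0 = mat 1" unfolding Phi_def using TI by simp

lemma contPhi: "continuous_on {0..} Phi"
  unfolding continuous_on_eq_continuous_within Phi_def
  using dTm[of 0] has_vector_derivative_continuous by (metis atLeast_iff order_refl)

lemma contPsi: "continuous_on {0..} Psi"
  by (rule cont_inv[OF contPhi PhiPsi]) simp

lemma dPhi: "t \<ge> 0 \<Longrightarrow> (Phi has_vector_derivative A t ** Phi t) (at t within {0..})"
  unfolding Phi_def using dTm[of 0 t] by simp

lemma P_eq: assumes "s \<ge> 0" shows "P s = Phi s ** P0 ** Psi s"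
proof -
  have "P s ** Phi s = Phi s ** P0" unfolding Phi_def P0_def using comm assms by auto
  then have "P s ** Phi s ** Psi s = Phi s ** P0 ** Psi s" by simp
  then show ?thesis using PhiPsi[OF assms] by (simp add: matrix_mul_assoc[symmetric])
qed

lemma TP_eq: assumes "t \<ge> 0" "s \<ge> 0" shows "T t s ** P s = Phi t ** P0 ** Psi s"
proof -
  have "T t s ** P s = Phi t ** (Psi s ** Phi s) ** P0 ** Psi s"
    using T_eq[OF assms] P_eq[OF assms(2)] by (simp add: matrix_mul_assoc)
  then show ?thesis using PsiPhi[OF assms(2)] by simp
qed

lemma mv_sub: "((X::real^'n^'n) ** (mat 1 - Y)) *v v = X *v v - X *v (Y *v v)"
  by (simp add: matrix_vector_mul_assoc[symmetric] matrix_vector_mult_diff_rdistrib matrix_vector_mult_diff_distrib)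

lemma TQ_eq: assumes "t \<ge> 0" "s \<ge> 0" shows "T t s ** (mat 1 - P s) = Phi t ** Q0 ** Psi s"
proof (rule matrix_eq[THEN iffD2], rule allI)
  fix v
  have "(T t s ** (mat 1 - P s)) *v v = T t s *v v - (T t s ** P s) *v v"
    by (simp add: mv_sub matrix_vector_mul_assoc)
  also have "\<dots> = Phi t *v (Psi s *v v) - Phi t *v (P0 *v (Psi s *v v))"
    using T_eq[OF assms] TP_eq[OF assms] by (simp add: matrix_vector_mul_assoc matrix_mul_assoc)
  also have "\<dots> = (Phi t ** Q0 ** Psi s) *v v"
    unfolding Q0_def P0_def by (simp add: matrix_vector_mul_assoc[symmetric] matrix_vector_mult_diff_rdistrib matrix_vector_mult_diff_distrib)
  finally show "(T t s ** (mat 1 - P s)) *v v = (Phi t ** Q0 ** Psi s) *v v" .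
qed

end


lemma Ivl_cases: "\<tau> > 0 \<Longrightarrow> Ivl \<tau> = {0..} \<or> (\<exists>r>0. Ivl \<tau> = {0..<r})"
proof (cases \<tau>)
  case (real r)
  assume "\<tau> > 0"
  then have "r > 0" using real by simp
  moreover have "Ivl \<tau> = {0..<r}" unfolding Ivl_def real by auto
  ultimately show ?thesis by blast
next
  case PInf then show ?thesis unfolding Ivl_def by auto
next
  case MInf assume "\<tau> > 0" then show ?thesis using MInf by simp
qed

lemma Ivl_meas: "\<tau> > 0 \<Longrightarrow> Ivl \<tau> \<in> sets lebesgue"
  using Ivl_cases[of \<tau>] by auto

lemma Ivl_meas2: "\<tau> > 0 \<Longrightarrow> Ivl \<tau> \<inter> {t<..} \<in> sets lebesgue"
  using Ivl_meas[of \<tau>] by (intro sets.Int) auto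

lemma ereal_lt_mono: "x \<le> t \<Longrightarrow> ereal t < \<tau> \<Longrightarrow> ereal x < \<tau>"
proof -
  assume "x \<le> t" "ereal t < \<tau>"
  moreover have "ereal x \<le> ereal t" using \<open>x \<le> t\<close> by simp
  ultimately show ?thesis using le_less_trans by blast
qed

lemma cont_mv: "continuous_on S f \<Longrightarrow> continuous_on S (\<lambda>s. (M::real^'n^'m) *v f s)"
  by (rule bounded_bilinear.continuous_on[OF bilinear_mv continuous_on_const])

lemma Ivl_0: "\<tau> > 0 \<Longrightarrow> 0 \<in> Ivl \<tau>" unfolding Ivl_def by (simp add: zero_ereal_def)

lemma Ivl_nonneg: "t \<in> Ivl \<tau> \<Longrightarrow> t \<ge> 0" unfolding Ivl_def by simp

lemma Ivl_sub: "t \<in> Ivl \<tau> \<Longrightarrow> {0..t} \<subseteq> Ivl \<tau>"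
  unfolding Ivl_def by (auto intro: ereal_lt_mono)

lemma Ivl_sub0: "Ivl \<tau> \<subseteq> {0..}" unfolding Ivl_def by auto

lemma Ivl_local: assumes "t \<in> Ivl \<tau>" shows "\<exists>t'>t. {0..t'} \<subseteq> Ivl \<tau>"
proof -
  have "ereal t < \<tau>" using assms unfolding Ivl_def by simp
  then obtain r where r: "ereal t < ereal r" "ereal r < \<tau>" using ereal_dense2 by blast
  then have "r > t" by simp
  moreover have "{0..r} \<subseteq> Ivl \<tau>" unfolding Ivl_def using r by (auto intro: ereal_lt_mono)
  ultimately show ?thesis by blast
qed

lemma at_Ivl: assumes "t < t'" "{0..t'} \<subseteq> Ivl \<tau>" "t \<in> Ivl \<tau>"
  shows "at t within Ivl \<tau> = at t within {0..t'}"
proof (rule at_within_nhd[of _ "{..<t'}"])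
  show "t \<in> {..<t'}" using assms by simp
  show "open {..<t'}" by simp
  have "Ivl \<tau> \<inter> {..<t'} = {0..t'} \<inter> {..<t'}" using assms(2) unfolding Ivl_def by auto
  then show "Ivl \<tau> \<inter> {..<t'} - {t} = {0..t'} \<inter> {..<t'} - {t}" by simp
qed

lemma Ivl_split: assumes "t \<in> Ivl \<tau>" shows "Ivl \<tau> = {0..t} \<union> (Ivl \<tau> \<inter> {t<..})"
  using Ivl_sub[OF assms] Ivl_nonneg[of _ \<tau>] by force

lemma exp_int1: assumes "(lam::real) > 0" "t \<ge> 0"
  shows "(\<lambda>s. exp (- lam * (t - s))) integrable_on {0..t}"
    and "integral {0..t} (\<lambda>s. exp (- lam * (t - s))) \<le> 1 / lam"
proof -
  have d: "((\<lambda>s. exp (- lam * (t - s)) / lam) has_vector_derivative exp (- lam * (t - s))) (at s within {0..t})" for s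
    using assms(1) by (auto intro!: derivative_eq_intros simp: has_real_derivative_iff_has_vector_derivative[symmetric])
  have hi: "((\<lambda>s. exp (- lam * (t - s))) has_integral (exp (- lam * (t - t)) / lam - exp (- lam * (t - 0)) / lam)) {0..t}"
    by (rule fundamental_theorem_of_calculus[OF assms(2)]) (use d in blast)
  then show "(\<lambda>s. exp (- lam * (t - s))) integrable_on {0..t}" by blast
  have "integral {0..t} (\<lambda>s. exp (- lam * (t - s))) = 1 / lam - exp (- lam * t) / lam"
    using integral_unique[OF hi] by simp
  also have "\<dots> \<le> 1 / lam" using assms(1) by simp
  finally show "integral {0..t} (\<lambda>s. exp (- lam * (t - s))) \<le> 1 / lam" .
qed

lemma exp_int2: assumes "(lam::real) > 0" "S \<in> sets lebesgue" "S \<subseteq> {t..}"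
  shows "(\<lambda>s. exp (- lam * (s - t))) integrable_on S"
    and "integral S (\<lambda>s. exp (- lam * (s - t))) \<le> 1 / lam"
proof -
  have eq: "(\<lambda>s. exp (- lam * (s - t))) = (\<lambda>s. exp (lam * t) * exp (- lam * s))"
    by (rule ext) (simp add: exp_add[symmetric] algebra_simps)
  have hi: "((\<lambda>s. exp (- lam * (s - t))) has_integral exp (lam * t) * (exp (- lam * t) / lam)) {t..}"
    unfolding eq using has_integral_mult_right[OF has_integral_exp_minus_to_infinity[OF assms(1), of t]] by simp
  have v: "exp (lam * t) * (exp (- lam * t) / lam) = 1 / lam" by (simp add: exp_minus field_simps)
  have ai: "(\<lambda>s. exp (- lam * (s - t))) absolutely_integrable_on {t..}"
    using hi by (intro nonnegative_absolutely_integrable_1) auto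
  have "(\<lambda>s. exp (- lam * (s - t))) absolutely_integrable_on S"
    by (rule set_integrable_subset[OF ai assms(2,3)])
  then show i: "(\<lambda>s. exp (- lam * (s - t))) integrable_on S" using absolutely_integrable_on_def by blast
  have "integral S (\<lambda>s. exp (- lam * (s - t))) \<le> integral {t..} (\<lambda>s. exp (- lam * (s - t)))"
    using hi i by (intro integral_subset_le assms(3)) auto
  also have "\<dots> = 1 / lam" using integral_unique[OF hi] v by simp
  finally show "integral S (\<lambda>s. exp (- lam * (s - t))) \<le> 1 / lam" .
qed

context nrmloc begin

lemma int_bound:
  fixes g :: "real \<Rightarrow> real^'n"
  assumes S: "S \<in> sets lebesgue" and g: "continuous_on S g" and b: "b integrable_on S"
    and le: "\<And>s. s \<in> S \<Longrightarrow> nrm (g s) \<le> b s"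
  shows "g integrable_on S" "nrm (integral S g) \<le> integral S b"
proof -
  obtain c1 where c1: "c1 > 0" "\<forall>x. norm x \<le> c1 * nrm x" using nrm_lower by blast
  have "g absolutely_integrable_on S"
  proof (rule measurable_bounded_by_integrable_imp_absolutely_integrable[OF continuous_imp_measurable_on_sets_lebesgue[OF g S] S])
    show "(\<lambda>s. c1 * b s) integrable_on S" using integrable_on_cmult_left[OF b, of c1] by simp
    show "norm (g s) \<le> c1 * b s" if "s \<in> S" for s
      using c1(2)[rule_format, of "g s"] mult_left_mono[OF le[OF that], of c1] c1(1) by linarith
  qed
  then show gi: "g integrable_on S" using absolutely_integrable_on_def by blast
  show "nrm (integral S g) \<le> integral S b" by (rule nrm_integral_le[OF gi b le])
qed

end

locale gre = dich nrm A N lam T P for nrm :: "real^'n \<Rightarrow> real" and A N lam T P +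
  fixes \<tau> :: ereal
  assumes tau: "\<tau> > 0"
begin

abbreviation "Iv \<equiv> Ivl \<tau>"

definition G :: "(real \<Rightarrow> real^'n) \<Rightarrow> real \<Rightarrow> real^'n" where
  "G k t = Phi t *v (integral {0..t} (\<lambda>s. Psi s *v k s) - integral Iv (\<lambda>s. Q0 *v (Psi s *v k s)))"

lemma TPk: "0 \<le> s \<Longrightarrow> s \<le> t \<Longrightarrow> nrm (Phi t *v (P0 *v (Psi s *v v))) \<le> N * exp (- lam * (t - s)) * nrm v"
proof -
  assume a: "0 \<le> s" "s \<le> t"
  have "Phi t *v (P0 *v (Psi s *v v)) = (T t s ** P s) *v v"
    using TP_eq[of t s] a by (simp add: matrix_vector_mul_assoc matrix_mul_assoc)
  also have "nrm \<dots> \<le> mat_norm nrm (T t s ** P s) * nrm v" by (rule mat_norm_bound)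
  also have "\<dots> \<le> N * exp (- lam * (t - s)) * nrm v" using bP a by (intro mult_right_mono) auto
  finally show ?thesis .
qed

lemma TQk: "0 \<le> t \<Longrightarrow> t \<le> s \<Longrightarrow> nrm (Phi t *v (Q0 *v (Psi s *v v))) \<le> N * exp (- lam * (s - t)) * nrm v"
proof -
  assume a: "0 \<le> t" "t \<le> s"
  have "Phi t *v (Q0 *v (Psi s *v v)) = (T t s ** (mat 1 - P s)) *v v"
    using TQ_eq[of t s] a by (simp add: matrix_vector_mul_assoc matrix_mul_assoc)
  also have "nrm \<dots> \<le> mat_norm nrm (T t s ** (mat 1 - P s)) * nrm v" by (rule mat_norm_bound)
  also have "\<dots> \<le> N * exp (- lam * (s - t)) * nrm v" using bQ a by (intro mult_right_mono) auto
  finally show ?thesis .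
qed

lemma contPsik: "continuous_on S k \<Longrightarrow> S \<subseteq> {0..} \<Longrightarrow> continuous_on S (\<lambda>s. Psi s *v k s)"
  by (rule bounded_bilinear.continuous_on[OF bilinear_mv continuous_on_subset[OF contPsi]])

lemma intQ:
  assumes k: "continuous_on Iv k" and K: "\<And>s. s \<in> Iv \<Longrightarrow> nrm (k s) \<le> K"
    and S: "S \<in> sets lebesgue" "S \<subseteq> Iv" "S \<subseteq> {t..}" and t: "t \<ge> 0"
  shows "(\<lambda>s. Phi t *v (Q0 *v (Psi s *v k s))) integrable_on S"
    "nrm (integral S (\<lambda>s. Phi t *v (Q0 *v (Psi s *v k s)))) \<le> N * K / lam"
proof -
  have K0: "K \<ge> 0" using K[OF Ivl_0[OF tau]] nrm_nonneg by (meson order_trans)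
  have cont: "continuous_on S (\<lambda>s. Phi t *v (Q0 *v (Psi s *v k s)))"
    using continuous_on_subset[OF contPsik[OF k Ivl_sub0] S(2)] by (intro cont_mv)
  have ei: "(\<lambda>s. exp (- lam * (s - t))) integrable_on S" by (rule exp_int2(1)[OF lampos S(1,3)])
  have bi: "(\<lambda>s. N * K * exp (- lam * (s - t))) integrable_on S" using integrable_on_cmult_left[OF ei, of "N * K"] by simp
  have le: "nrm (Phi t *v (Q0 *v (Psi s *v k s))) \<le> N * K * exp (- lam * (s - t))" if "s \<in> S" for s
  proof -
    have "nrm (Phi t *v (Q0 *v (Psi s *v k s))) \<le> N * exp (- lam * (s - t)) * nrm (k s)"
      using TQk[of t s "k s"] that S t by auto
    also have "\<dots> \<le> N * exp (- lam * (s - t)) * K" using K[of s] that S Npos by (intro mult_left_mono) auto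
    finally show ?thesis by (simp add: algebra_simps)
  qed
  show "(\<lambda>s. Phi t *v (Q0 *v (Psi s *v k s))) integrable_on S" by (rule int_bound(1)[OF S(1) cont bi le])
  have "nrm (integral S (\<lambda>s. Phi t *v (Q0 *v (Psi s *v k s)))) \<le> integral S (\<lambda>s. N * K * exp (- lam * (s - t)))"
    by (rule int_bound(2)[OF S(1) cont bi le])
  also have "\<dots> = N * K * integral S (\<lambda>s. exp (- lam * (s - t)))" by simp
  also have "\<dots> \<le> N * K * (1 / lam)" using exp_int2(2)[OF lampos S(1,3)] Npos K0 by (intro mult_left_mono) auto
  finally show "nrm (integral S (\<lambda>s. Phi t *v (Q0 *v (Psi s *v k s)))) \<le> N * K / lam" by simp
qed

lemma intP:
  assumes k: "continuous_on Iv k" and K: "\<And>s. s \<in> Iv \<Longrightarrow> nrm (k s) \<le> K" and t: "t \<in> Iv"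
  shows "(\<lambda>s. Phi t *v (P0 *v (Psi s *v k s))) integrable_on {0..t}"
    "nrm (integral {0..t} (\<lambda>s. Phi t *v (P0 *v (Psi s *v k s)))) \<le> N * K / lam"
proof -
  have t0: "t \<ge> 0" using t Ivl_nonneg by blast
  have K0: "K \<ge> 0" using K[OF Ivl_0[OF tau]] nrm_nonneg by (meson order_trans)
  have cont: "continuous_on {0..t} (\<lambda>s. Phi t *v (P0 *v (Psi s *v k s)))"
    using continuous_on_subset[OF contPsik[OF k Ivl_sub0] Ivl_sub[OF t]] by (intro cont_mv)
  have ei: "(\<lambda>s. exp (- lam * (t - s))) integrable_on {0..t}" by (rule exp_int1(1)[OF lampos t0])
  have bi: "(\<lambda>s. N * K * exp (- lam * (t - s))) integrable_on {0..t}" using integrable_on_cmult_left[OF ei, of "N * K"] by simp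
  have le: "nrm (Phi t *v (P0 *v (Psi s *v k s))) \<le> N * K * exp (- lam * (t - s))" if "s \<in> {0..t}" for s
  proof -
    have "nrm (Phi t *v (P0 *v (Psi s *v k s))) \<le> N * exp (- lam * (t - s)) * nrm (k s)"
      using TPk[of s t "k s"] that by auto
    also have "\<dots> \<le> N * exp (- lam * (t - s)) * K" using K[of s] that Ivl_sub[OF t] Npos by (intro mult_left_mono) auto
    finally show ?thesis by (simp add: algebra_simps)
  qed
  show "(\<lambda>s. Phi t *v (P0 *v (Psi s *v k s))) integrable_on {0..t}" by (rule int_bound(1)[OF _ cont bi le]) simp
  have "nrm (integral {0..t} (\<lambda>s. Phi t *v (P0 *v (Psi s *v k s)))) \<le> integral {0..t} (\<lambda>s. N * K * exp (- lam * (t - s)))"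
    by (rule int_bound(2)[OF _ cont bi le]) simp
  also have "\<dots> = N * K * integral {0..t} (\<lambda>s. exp (- lam * (t - s)))" by simp
  also have "\<dots> \<le> N * K * (1 / lam)" using exp_int1(2)[OF lampos t0] Npos K0 by (intro mult_left_mono) auto
  finally show "nrm (integral {0..t} (\<lambda>s. Phi t *v (P0 *v (Psi s *v k s)))) \<le> N * K / lam" by simp
qed

end


lemma Icc_meas: "{a..b::real} \<in> sets lebesgue" by (metis atLeastAtMost_borel sets_completionI_sets sets_lborel)

context gre begin

lemma QI:
  assumes k: "continuous_on Iv k" and K: "\<And>s. s \<in> Iv \<Longrightarrow> nrm (k s) \<le> K"
    and S: "S \<in> sets lebesgue" "S \<subseteq> Iv"
  shows "(\<lambda>s. Q0 *v (Psi s *v k s)) integrable_on S"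
proof -
  have "S \<subseteq> {0..}" using S(2) Ivl_sub0 by blast
  from intQ(1)[OF k K S(1,2) this order_refl] show ?thesis by (simp add: Phi0)
qed

lemma PsiI:
  assumes k: "continuous_on Iv k" and t: "t \<in> Iv"
  shows "(\<lambda>s. Psi s *v k s) integrable_on {0..t}"
  by (rule integrable_continuous_interval, rule continuous_on_subset[OF contPsik[OF k Ivl_sub0] Ivl_sub[OF t]])

lemma G_bound:
  assumes k: "continuous_on Iv k" and K: "\<And>s. s \<in> Iv \<Longrightarrow> nrm (k s) \<le> K" and t: "t \<in> Iv"
  shows "nrm (G k t) \<le> 2 * N * K / lam"
proof -
  have t0: "t \<ge> 0" using t Ivl_nonneg by blast
  define u where "u s = Psi s *v k s" for s
  define S2 where "S2 = Iv \<inter> {t<..}"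
  have S2m: "S2 \<in> sets lebesgue" unfolding S2_def by (rule Ivl_meas2[OF tau])
  have S2s: "S2 \<subseteq> Iv" "S2 \<subseteq> {t..}" unfolding S2_def by auto
  have ui: "u integrable_on {0..t}" unfolding u_def by (rule PsiI[OF k t])
  have qi1: "(\<lambda>s. Q0 *v u s) integrable_on {0..t}" unfolding u_def using QI[OF k K Icc_meas Ivl_sub[OF t]] .
  have qi2: "(\<lambda>s. Q0 *v u s) integrable_on S2" unfolding u_def using QI[OF k K S2m S2s(1)] .
  have split: "integral Iv (\<lambda>s. Q0 *v u s) = integral {0..t} (\<lambda>s. Q0 *v u s) + integral S2 (\<lambda>s. Q0 *v u s)"
  proof -
    have "Iv = {0..t} \<union> S2" unfolding S2_def by (rule Ivl_split[OF t])
    moreover have "{0..t} \<inter> S2 = {}" unfolding S2_def by auto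
    then have "negligible ({0..t} \<inter> S2)" by simp
    ultimately show ?thesis using integral_Un[OF qi1 qi2] by simp
  qed
  have pq: "u s - Q0 *v u s = P0 *v u s" for s
    unfolding Q0_def P0_def by (simp add: matrix_vector_mult_diff_rdistrib)
  have "integral {0..t} u - integral Iv (\<lambda>s. Q0 *v u s)
        = integral {0..t} (\<lambda>s. P0 *v u s) - integral S2 (\<lambda>s. Q0 *v u s)"
    using split integral_diff[OF ui qi1] pq by simp
  then have "G k t = Phi t *v (integral {0..t} (\<lambda>s. P0 *v u s) - integral S2 (\<lambda>s. Q0 *v u s))"
    unfolding G_def u_def by simp
  also have "\<dots> = integral {0..t} (\<lambda>s. Phi t *v (P0 *v u s)) - integral S2 (\<lambda>s. Phi t *v (Q0 *v u s))"
  proof -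
    have pi: "(\<lambda>s. P0 *v u s) integrable_on {0..t}"
      using integrable_linear[OF ui matrix_vector_mul_bounded_linear[of P0]] by (simp add: o_def)
    show ?thesis
      using integral_linear[OF pi matrix_vector_mul_bounded_linear[of "Phi t"]]
        integral_linear[OF qi2 matrix_vector_mul_bounded_linear[of "Phi t"]]
      by (simp add: o_def matrix_vector_mult_diff_distrib)
  qed
  finally have eq: "G k t = integral {0..t} (\<lambda>s. Phi t *v (P0 *v u s)) - integral S2 (\<lambda>s. Phi t *v (Q0 *v u s))" .
  have b1: "nrm (integral {0..t} (\<lambda>s. Phi t *v (P0 *v u s))) \<le> N * K / lam"
    unfolding u_def by (rule intP(2)[OF k K t])
  have b2: "nrm (integral S2 (\<lambda>s. Phi t *v (Q0 *v u s))) \<le> N * K / lam"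
    unfolding u_def by (rule intQ(2)[OF k K S2m S2s t0])
  have "nrm (G k t) \<le> N * K / lam + N * K / lam"
    unfolding eq using nrm_tri_diff2[of "integral {0..t} (\<lambda>s. Phi t *v (P0 *v u s))" "integral S2 (\<lambda>s. Phi t *v (Q0 *v u s))"] b1 b2 by linarith
  also have "N * K / lam + N * K / lam = 2 * N * K / lam" by (simp add: field_simps)
  finally show ?thesis .
qed

lemma G_diff:
  assumes k1: "continuous_on Iv k1" and K1: "\<And>s. s \<in> Iv \<Longrightarrow> nrm (k1 s) \<le> K1"
    and k2: "continuous_on Iv k2" and K2: "\<And>s. s \<in> Iv \<Longrightarrow> nrm (k2 s) \<le> K2" and t: "t \<in> Iv"
  shows "G k1 t - G k2 t = G (\<lambda>s. k1 s - k2 s) t"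
proof -
  have a: "integral {0..t} (\<lambda>s. Psi s *v (k1 s - k2 s)) = integral {0..t} (\<lambda>s. Psi s *v k1 s) - integral {0..t} (\<lambda>s. Psi s *v k2 s)"
    using integral_diff[OF PsiI[OF k1 t] PsiI[OF k2 t]] by (simp add: matrix_vector_mult_diff_distrib)
  have b: "integral Iv (\<lambda>s. Q0 *v (Psi s *v (k1 s - k2 s))) = integral Iv (\<lambda>s. Q0 *v (Psi s *v k1 s)) - integral Iv (\<lambda>s. Q0 *v (Psi s *v k2 s))"
    using integral_diff[OF QI[OF k1 K1 Ivl_meas[OF tau] order_refl] QI[OF k2 K2 Ivl_meas[OF tau] order_refl]]
    by (simp add: matrix_vector_mult_diff_distrib)
  show ?thesis unfolding G_def a b by (simp add: matrix_vector_mult_diff_distrib algebra_simps)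
qed

lemma G_deriv:
  assumes k: "continuous_on Iv k" and t: "t \<in> Iv"
  shows "(G k has_vector_derivative A t *v G k t + k t) (at t within Iv)"
proof -
  obtain t' where t': "t' > t" "{0..t'} \<subseteq> Iv" using Ivl_local[OF t] by blast
  have t0: "t \<ge> 0" using t Ivl_nonneg by blast
  define C where "C = integral Iv (\<lambda>s. Q0 *v (Psi s *v k s))"
  define W where "W x = integral {0..x} (\<lambda>s. Psi s *v k s) - C" for x
  have Geq: "G k = (\<lambda>x. Phi x *v W x)" unfolding G_def W_def C_def by (rule ext) simp
  have cu: "continuous_on {0..t'} (\<lambda>s. Psi s *v k s)"
    by (rule continuous_on_subset[OF contPsik[OF k Ivl_sub0] t'(2)])
  have dW: "(W has_vector_derivative Psi t *v k t) (at t within {0..t'})"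
  proof -
    have "t \<in> {0..t'}" using t0 t'(1) by simp
    from has_vector_derivative_diff[OF integral_has_vector_derivative[OF cu this] has_vector_derivative_const[of C]]
    show ?thesis unfolding W_def by simp
  qed
  have dP: "(Phi has_vector_derivative A t ** Phi t) (at t within {0..t'})"
    by (rule has_vector_derivative_within_subset[OF dPhi[OF t0]]) auto
  have "((\<lambda>x. Phi x *v W x) has_vector_derivative Phi t *v (Psi t *v k t) + (A t ** Phi t) *v W t) (at t within {0..t'})"
    by (rule bounded_bilinear.has_vector_derivative[OF bilinear_mv dP dW])
  moreover have "Phi t *v (Psi t *v k t) + (A t ** Phi t) *v W t = A t *v G k t + k t"
  proof -
    have "Phi t *v (Psi t *v k t) = k t" using PhiPsi[OF t0] by (simp add: matrix_vector_mul_assoc)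
    moreover have "(A t ** Phi t) *v W t = A t *v (Phi t *v W t)" by (simp add: matrix_vector_mul_assoc)
    ultimately show ?thesis unfolding Geq by simp
  qed
  ultimately have "(G k has_vector_derivative A t *v G k t + k t) (at t within {0..t'})" unfolding Geq by simp
  then show ?thesis using at_Ivl[OF t'(1,2) t] by simp
qed

end


context nrmloc begin

lemma f_lip:
  fixes f ft :: "real \<Rightarrow> real^'n \<Rightarrow> real^'n" and fx :: "real \<Rightarrow> real^'n \<Rightarrow> real^'n^'n"
  assumes C1: "\<forall>t\<ge>0. \<forall>x. ((\<lambda>p. f (fst p) (snd p)) has_derivative
                    (\<lambda>h. fst h *\<^sub>R ft t x + fx t x *v snd h)) (at (t, x) within {0..} \<times> UNIV)"
    and bd: "\<And>x. nrm x \<le> R \<Longrightarrow> mat_norm nrm (fx t x) \<le> Lp"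
    and t: "t \<ge> 0" and a: "nrm a \<le> R" and b: "nrm b \<le> R"
  shows "nrm (f t a - f t b) \<le> Lp * nrm (a - b)"
proof -
  obtain l where l: "\<forall>x. l \<bullet> x \<le> nrm x" "l \<bullet> (f t a - f t b) = nrm (f t a - f t b)"
    using dual_functional by blast
  define F where "F p = f (fst p) (snd p)" for p :: "real \<times> (real^'n)"
  define F' where "F' p h = fst h *\<^sub>R ft (fst p) (snd p) + fx (fst p) (snd p) *v snd h" for p :: "real \<times> (real^'n)" and h :: "real \<times> (real^'n)"
  define w where "w \<theta> = b + \<theta> *\<^sub>R (a - b)" for \<theta> :: real
  define \<gamma> where "\<gamma> \<theta> = (t, w \<theta>)" for \<theta> :: real
  have dF: "(F has_derivative F' p) (at p within {0..} \<times> UNIV)" if "p \<in> {0..} \<times> UNIV" for p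
    using C1 that unfolding F_def F'_def by (cases p) auto
  have d\<gamma>: "(\<gamma> has_derivative (\<lambda>h. (0, h *\<^sub>R (a - b)))) (at \<theta> within UNIV)" for \<theta>
    unfolding \<gamma>_def w_def by (auto intro!: derivative_eq_intros)
  have im: "\<gamma> ` UNIV \<subseteq> {0..} \<times> UNIV" unfolding \<gamma>_def using t by auto
  define \<phi> where "\<phi> \<theta> = l \<bullet> f t (w \<theta>)" for \<theta>
  have d\<phi>: "(\<phi> has_real_derivative l \<bullet> (fx t (w \<theta>) *v (a - b))) (at \<theta>)" for \<theta>
  proof -
    have "((\<lambda>\<theta>. F (\<gamma> \<theta>)) has_derivative (\<lambda>y. F' (\<gamma> \<theta>) (0, y *\<^sub>R (a - b)))) (at \<theta> within UNIV)"
      by (rule has_derivative_in_compose2[OF dF im _ d\<gamma>]) auto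
    then have "((\<lambda>\<theta>. f t (w \<theta>)) has_derivative (\<lambda>y. y *\<^sub>R (fx t (w \<theta>) *v (a - b)))) (at \<theta>)"
      unfolding F_def F'_def \<gamma>_def by (simp add: matrix_vector_mult_scaleR)
    from has_derivative_inner_right[OF this, of l]
    have "(\<phi> has_derivative (\<lambda>y. y * (l \<bullet> (fx t (w \<theta>) *v (a - b))))) (at \<theta>)"
      unfolding \<phi>_def by simp
    moreover have "(\<lambda>y. y * (l \<bullet> (fx t (w \<theta>) *v (a - b)))) = (*) (l \<bullet> (fx t (w \<theta>) *v (a - b)))"
      by (rule ext) (simp add: mult.commute)
    ultimately show ?thesis unfolding has_field_derivative_def by simp
  qed
  have "continuous_on {0..1} \<phi>"
    using d\<phi> by (meson DERIV_continuous continuous_at_imp_continuous_on)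
  then obtain D z where z: "0 < z" "z < 1" "(\<phi> has_real_derivative D) (at z)" "\<phi> 1 - \<phi> 0 = (1 - 0) * D"
    using MVT[of 0 1 \<phi>] d\<phi> unfolding real_differentiable_def by force
  have D: "D = l \<bullet> (fx t (w z) *v (a - b))" using DERIV_unique[OF z(3) d\<phi>] .
  have wz: "nrm (w z) \<le> R"
  proof -
    have "w z = (1 - z) *\<^sub>R b + z *\<^sub>R a" unfolding w_def by (simp add: algebra_simps)
    then have "nrm (w z) \<le> (1 - z) * nrm b + z * nrm a"
      using nrm_tri[of "(1 - z) *\<^sub>R b" "z *\<^sub>R a"] z by (simp add: nrm_scale)
    also have "\<dots> \<le> (1 - z) * R + z * R" using z a b by (intro add_mono mult_left_mono) auto
    finally show ?thesis by (simp add: algebra_simps)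
  qed
  have "nrm (f t a - f t b) = \<phi> 1 - \<phi> 0" unfolding \<phi>_def w_def using l(2) by (simp add: inner_diff_right)
  also have "\<dots> = l \<bullet> (fx t (w z) *v (a - b))" using z(4) D by simp
  also have "\<dots> \<le> nrm (fx t (w z) *v (a - b))" using l(1) by blast
  also have "\<dots> \<le> mat_norm nrm (fx t (w z)) * nrm (a - b)" by (rule mat_norm_bound)
  also have "\<dots> \<le> Lp * nrm (a - b)" using bd[OF wz] by (intro mult_right_mono) auto
  finally show ?thesis .
qed

end


context gre begin

lemma Gcont: assumes "continuous_on Iv k" shows "continuous_on Iv (G k)"
  unfolding continuous_on_eq_continuous_within
  using G_deriv[OF assms] has_vector_derivative_continuous by blast

lemma shadow_core:
  fixes f :: "real \<Rightarrow> real^'n \<Rightarrow> real^'n" and y y' :: "real \<Rightarrow> real^'n"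
  assumes fcont: "continuous_on ({0..} \<times> UNIV) (\<lambda>p. f (fst p) (snd p))"
    and flip: "\<And>t a b. t \<ge> 0 \<Longrightarrow> nrm a \<le> R \<Longrightarrow> nrm b \<le> R \<Longrightarrow> nrm (f t a - f t b) \<le> Lp * nrm (a - b)"
    and Lp: "Lp \<ge> 0" "2 * N * Lp < lam"
    and eps: "\<epsilon> > 0" and small: "(2 * N / lam) / (1 - 2 * N / lam * Lp) * \<epsilon> + \<rho> \<le> R"
    and dy: "\<And>t. t \<in> Iv \<Longrightarrow> (y has_vector_derivative y' t) (at t within Iv)"
    and cy': "continuous_on Iv y'"
    and pe: "\<And>t. t \<in> Iv \<Longrightarrow> nrm (y' t - (A t *v y t + f t (y t))) \<le> \<epsilon>"
    and yb: "\<And>t. t \<in> Iv \<Longrightarrow> nrm (y t) \<le> \<rho>"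
  shows "\<exists>x. is_solution (\<lambda>t x. A t *v x + f t x) \<tau> x \<and>
             (\<forall>t\<in>Iv. nrm (x t - y t) \<le> (2 * N / lam) / (1 - 2 * N / lam * Lp) * \<epsilon>)"
proof -
  define ce where "ce = 2 * N / lam"
  define q where "q = ce * Lp"
  define \<kappa> where "\<kappa> = ce / (1 - q)"
  have ce0: "ce > 0" unfolding ce_def using Npos lampos by simp
  have q0: "q \<ge> 0" unfolding q_def using ce0 Lp by simp
  have q1: "q < 1" unfolding q_def ce_def using Lp lampos by (simp add: field_simps)
  have k0: "\<kappa> > 0" unfolding \<kappa>_def using ce0 q1 by simp
  have kq: "q * \<kappa> + ce = \<kappa>" unfolding \<kappa>_def using q1 by (simp add: field_simps)
  have ke: "\<kappa> * \<epsilon> + \<rho> \<le> R" using small unfolding \<kappa>_def q_def ce_def .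
  have cb: "2 * N * K / lam = ce * K" for K unfolding ce_def by simp
  obtain c1 where c1: "c1 > 0" "\<forall>x. norm x \<le> c1 * nrm x" using nrm_lower by blast
  have cy: "continuous_on Iv y"
    unfolding continuous_on_eq_continuous_within using dy has_vector_derivative_continuous by blast
  have cA: "continuous_on Iv A" by (rule continuous_on_subset[OF contA Ivl_sub0])
  have cf: "continuous_on Iv (\<lambda>s. f s (w s))" if "continuous_on Iv w" for w
  proof -
    have "continuous_on Iv (\<lambda>s. (\<lambda>p. f (fst p) (snd p)) ((\<lambda>s. (s, w s)) s))"
      by (rule continuous_on_compose2[OF fcont]) (use that Ivl_sub0 in \<open>auto intro!: continuous_intros\<close>)
    then show ?thesis by simp
  qed
  define g where "g s = y' s - (A s *v y s + f s (y s))" for s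
  have cg: "continuous_on Iv g" unfolding g_def
    by (intro continuous_intros cy' cf cy bounded_bilinear.continuous_on[OF bilinear_mv cA cy])
  define h where "h z s = f s (y s + z s) - f s (y s) - g s" for z :: "real \<Rightarrow> real^'n" and s
  have hcont: "continuous_on Iv (h z)" if "continuous_on Iv z" for z
    unfolding h_def by (intro continuous_intros cf cg cy that)
  have ybR: "nrm (y s) \<le> R" if "s \<in> Iv" for s using yb[OF that] ke k0 eps
    by (smt (verit) mult_pos_pos)
  have yzR: "nrm (y s + z s) \<le> R" if "s \<in> Iv" "nrm (z s) \<le> \<kappa> * \<epsilon>" for z s
    using nrm_tri[of "y s" "z s"] yb[OF that(1)] that(2) ke by linarith
  have hdiff: "nrm (h z1 s - h z2 s) \<le> Lp * nrm (z1 s - z2 s)"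
    if "s \<in> Iv" "nrm (z1 s) \<le> \<kappa> * \<epsilon>" "nrm (z2 s) \<le> \<kappa> * \<epsilon>" for z1 z2 s
  proof -
    have "h z1 s - h z2 s = f s (y s + z1 s) - f s (y s + z2 s)" unfolding h_def by simp
    moreover have "nrm (f s (y s + z1 s) - f s (y s + z2 s)) \<le> Lp * nrm ((y s + z1 s) - (y s + z2 s))"
      by (rule flip[OF Ivl_nonneg[OF that(1)] yzR[of s z1, OF that(1,2)] yzR[of s z2, OF that(1,3)]])
    ultimately show ?thesis by simp
  qed
  have gb: "nrm (g s) \<le> \<epsilon>" if "s \<in> Iv" for s unfolding g_def using pe[OF that] .
  have hbound: "nrm (h z s) \<le> Lp * (\<kappa> * \<epsilon>) + \<epsilon>" if "s \<in> Iv" "nrm (z s) \<le> \<kappa> * \<epsilon>" for z s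
  proof -
    have "nrm (f s (y s + z s) - f s (y s)) \<le> Lp * nrm ((y s + z s) - y s)"
      by (rule flip[OF Ivl_nonneg[OF that(1)] yzR[of s z, OF that] ybR[OF that(1)]])
    also have "\<dots> \<le> Lp * (\<kappa> * \<epsilon>)" using that(2) Lp(1) by (intro mult_left_mono) auto
    finally have "nrm (f s (y s + z s) - f s (y s)) \<le> Lp * (\<kappa> * \<epsilon>)" .
    then show ?thesis unfolding h_def
      using nrm_tri_diff2[of "f s (y s + z s) - f s (y s)" "g s"] gb[OF that(1)] by linarith
  qed
  define zz where "zz = rec_nat (\<lambda>s. 0) (\<lambda>m z. G (h z))"
  have zz0: "zz 0 = (\<lambda>s. 0)" and zzS: "zz (Suc m) = G (h (zz m))" for m unfolding zz_def by simp_all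
  have inv: "continuous_on Iv (zz m) \<and> (\<forall>t\<in>Iv. nrm (zz m t) \<le> \<kappa> * \<epsilon>)" for m
  proof (induction m)
    case 0 show ?case unfolding zz0 using k0 eps by simp
  next
    case (Suc m)
    have hc: "continuous_on Iv (h (zz m))" using hcont Suc by blast
    have hb: "\<And>s. s \<in> Iv \<Longrightarrow> nrm (h (zz m) s) \<le> Lp * (\<kappa> * \<epsilon>) + \<epsilon>" using hbound Suc by blast
    have "nrm (zz (Suc m) t) \<le> \<kappa> * \<epsilon>" if "t \<in> Iv" for t
    proof -
      have "nrm (zz (Suc m) t) \<le> ce * (Lp * (\<kappa> * \<epsilon>) + \<epsilon>)" unfolding zzS using G_bound[OF hc hb that, unfolded cb] .
      also have "\<dots> = (q * \<kappa> + ce) * \<epsilon>" unfolding q_def by (simp add: algebra_simps)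
      also have "\<dots> = \<kappa> * \<epsilon>" using kq by simp
      finally show ?thesis .
    qed
    then show ?case unfolding zzS using Gcont[OF hc] by blast
  qed
  have zc: "continuous_on Iv (zz m)" and zb: "\<And>t. t \<in> Iv \<Longrightarrow> nrm (zz m t) \<le> \<kappa> * \<epsilon>" for m
    using inv by blast+
  have hzb: "\<And>s. s \<in> Iv \<Longrightarrow> nrm (h (zz m) s) \<le> Lp * (\<kappa> * \<epsilon>) + \<epsilon>" for m using hbound zb by blast
  have diffs: "\<forall>t\<in>Iv. nrm (zz (Suc m) t - zz m t) \<le> q ^ m * (ce * \<epsilon>)" for m
  proof (induction m)
    case 0
    have hc: "continuous_on Iv (h (zz 0))" using hcont zc by blast
    have hb: "\<And>s. s \<in> Iv \<Longrightarrow> nrm (h (zz 0) s) \<le> \<epsilon>" unfolding zz0 h_def using gb by simp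
    show ?case
    proof
      fix t assume t: "t \<in> Iv"
      have "nrm (G (h (zz 0)) t) \<le> ce * \<epsilon>" using G_bound[OF hc hb t, unfolded cb] .
      then show "nrm (zz (Suc 0) t - zz 0 t) \<le> q ^ 0 * (ce * \<epsilon>)" unfolding zzS by (simp add: zz0)
    qed
  next
    case (Suc m)
    show ?case
    proof
      fix t assume t: "t \<in> Iv"
      have hc1: "continuous_on Iv (h (zz (Suc m)))" and hc2: "continuous_on Iv (h (zz m))" using hcont zc by blast+
      have "zz (Suc (Suc m)) t - zz (Suc m) t = G (h (zz (Suc m))) t - G (h (zz m)) t"
        by (simp only: fun_cong[OF zzS[of "Suc m"]] fun_cong[OF zzS[of m]])
      also have "\<dots> = G (\<lambda>s. h (zz (Suc m)) s - h (zz m) s) t"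
        by (rule G_diff[OF hc1 hzb hc2 hzb t])
      finally have "zz (Suc (Suc m)) t - zz (Suc m) t = G (\<lambda>s. h (zz (Suc m)) s - h (zz m) s) t" .
      moreover have "nrm (G (\<lambda>s. h (zz (Suc m)) s - h (zz m) s) t) \<le> ce * (Lp * (q ^ m * (ce * \<epsilon>)))"
      proof -
        have b: "nrm (h (zz (Suc m)) s - h (zz m) s) \<le> Lp * (q ^ m * (ce * \<epsilon>))" if "s \<in> Iv" for s
        proof -
          have "nrm (h (zz (Suc m)) s - h (zz m) s) \<le> Lp * nrm (zz (Suc m) s - zz m s)"
            by (rule hdiff[OF that zb zb]) (use that in auto)
          also have "\<dots> \<le> Lp * (q ^ m * (ce * \<epsilon>))" using Suc.IH that Lp(1) by (intro mult_left_mono) auto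
          finally show ?thesis .
        qed
        show ?thesis using G_bound[OF continuous_on_diff[OF hc1 hc2] b t, unfolded cb] .
      qed
      ultimately show "nrm (zz (Suc (Suc m)) t - zz (Suc m) t) \<le> q ^ Suc m * (ce * \<epsilon>)"
        unfolding q_def by (simp add: algebra_simps)
    qed
  qed
  have tail0: "nrm (zz (m + p) t - zz m t) \<le> ce * \<epsilon> * q ^ m * (1 - q ^ p) / (1 - q)" if t: "t \<in> Iv" for m p t
  proof (induction p)
    case 0 then show ?case by simp
  next
    case (Suc p)
    have "nrm (zz (m + Suc p) t - zz m t) \<le> nrm (zz (Suc (m + p)) t - zz (m + p) t) + nrm (zz (m + p) t - zz m t)"
      using nrm_tri_diff by simp
    also have "\<dots> \<le> q ^ (m + p) * (ce * \<epsilon>) + ce * \<epsilon> * q ^ m * (1 - q ^ p) / (1 - q)"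
      using diffs t Suc.IH by (intro add_mono) auto
    also have "\<dots> = ce * \<epsilon> * q ^ m * (1 - q ^ Suc p) / (1 - q)"
      using q1 by (simp add: field_simps power_add)
    finally show ?case .
  qed
  have tail: "nrm (zz n t - zz m t) \<le> \<kappa> * \<epsilon> * q ^ m" if t: "t \<in> Iv" and mn: "m \<le> n" for m n t
  proof -
    obtain p where p: "n = m + p" using mn le_Suc_ex by blast
    have "nrm (zz n t - zz m t) \<le> ce * \<epsilon> * q ^ m * (1 - q ^ p) / (1 - q)" unfolding p by (rule tail0[OF t])
    also have "\<dots> \<le> ce * \<epsilon> * q ^ m * 1 / (1 - q)"
      using q0 q1 ce0 eps by (intro divide_right_mono mult_left_mono) auto
    also have "\<dots> = \<kappa> * \<epsilon> * q ^ m" unfolding \<kappa>_def by simp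
    finally show ?thesis .
  qed
  have qlim: "(\<lambda>m. q ^ m) \<longlonglongrightarrow> 0" using q0 q1 by (intro LIMSEQ_power_zero) simp
  have small_ev: "\<forall>\<^sub>F m in sequentially. C * q ^ m < e" if "e > 0" for C e
  proof -
    have "(\<lambda>m. C * q ^ m) \<longlonglongrightarrow> C * 0" by (intro tendsto_mult tendsto_const qlim)
    then show ?thesis using that by (simp add: order_tendsto_iff)
  qed
  have cauchy: "Cauchy (\<lambda>m. zz m t)" if t: "t \<in> Iv" for t
  proof (rule CauchyI)
    fix e :: real assume e: "e > 0"
    obtain M where M: "\<And>m. m \<ge> M \<Longrightarrow> c1 * (\<kappa> * \<epsilon>) * q ^ m < e"
      using small_ev[OF e, of "c1 * (\<kappa> * \<epsilon>)"] unfolding eventually_sequentially by blast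
    have "norm (zz m t - zz n t) < e" if "m \<ge> M" "n \<ge> M" for m n
    proof -
      have "nrm (zz m t - zz n t) \<le> \<kappa> * \<epsilon> * q ^ M"
      proof (cases "m \<le> n")
        case True
        then have "nrm (zz n t - zz m t) \<le> \<kappa> * \<epsilon> * q ^ m" by (rule tail[OF t])
        also have "\<dots> \<le> \<kappa> * \<epsilon> * q ^ M" using that q0 q1 k0 eps by (intro mult_left_mono power_decreasing) auto
        finally show ?thesis by (simp add: nrm_minus_comm)
      next
        case False
        then have "nrm (zz m t - zz n t) \<le> \<kappa> * \<epsilon> * q ^ n" by (intro tail[OF t]) auto
        also have "\<dots> \<le> \<kappa> * \<epsilon> * q ^ M" using that q0 q1 k0 eps by (intro mult_left_mono power_decreasing) auto
        finally show ?thesis .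
      qed
      then have "norm (zz m t - zz n t) \<le> c1 * (\<kappa> * \<epsilon> * q ^ M)"
        using c1 by (meson mult_left_mono less_imp_le order_trans)
      then show ?thesis using M[of M] by (simp add: mult.assoc)
    qed
    then show "\<exists>M. \<forall>m\<ge>M. \<forall>n\<ge>M. norm (zz m t - zz n t) < e" by blast
  qed
  define z where "z t = lim (\<lambda>m. zz m t)" for t
  have lz: "(\<lambda>m. zz m t) \<longlonglongrightarrow> z t" if "t \<in> Iv" for t
    unfolding z_def using cauchy[OF that] by (simp add: Cauchy_convergent_iff convergent_LIMSEQ_iff)
  have nrm_tend: "(\<lambda>m. nrm (X m)) \<longlonglongrightarrow> nrm x" if "X \<longlonglongrightarrow> x" for X x
    using continuous_on_tendsto_compose[OF nrm_continuous[of UNIV] that] by simp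
  have ztail: "nrm (z t - zz m t) \<le> \<kappa> * \<epsilon> * q ^ m" if t: "t \<in> Iv" for t m
  proof (rule LIMSEQ_le_const2)
    show "(\<lambda>n. nrm (zz n t - zz m t)) \<longlonglongrightarrow> nrm (z t - zz m t)"
      by (intro nrm_tend tendsto_diff lz[OF t] tendsto_const)
    show "\<exists>N. \<forall>n\<ge>N. nrm (zz n t - zz m t) \<le> \<kappa> * \<epsilon> * q ^ m" using tail[OF t] by blast
  qed
  have zbd: "nrm (z t) \<le> \<kappa> * \<epsilon>" if t: "t \<in> Iv" for t
    by (rule LIMSEQ_le_const2[OF nrm_tend[OF lz[OF t]]]) (use zb t in blast)
  have zcont: "continuous_on Iv z"
  proof (rule uniform_limit_theorem[where f=zz and F=sequentially])
    show "\<forall>\<^sub>F m in sequentially. continuous_on Iv (zz m)" using zc by simp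
    show "sequentially \<noteq> bot" by simp
    show "uniform_limit Iv zz z sequentially" unfolding uniform_limit_iff
    proof (intro allI impI)
      fix e :: real assume e: "e > 0"
      show "\<forall>\<^sub>F m in sequentially. \<forall>t\<in>Iv. dist (zz m t) (z t) < e"
        using small_ev[OF e, of "c1 * (\<kappa> * \<epsilon>)"]
      proof eventually_elim
        case (elim m)
        show ?case
        proof
          fix t assume t: "t \<in> Iv"
          have "dist (zz m t) (z t) = norm (z t - zz m t)" by (simp add: dist_norm norm_minus_commute)
          also have "\<dots> \<le> c1 * nrm (z t - zz m t)" using c1 by blast
          also have "\<dots> \<le> c1 * (\<kappa> * \<epsilon> * q ^ m)" using ztail[OF t] c1 by (intro mult_left_mono) auto
          also have "\<dots> < e" using elim by (simp add: mult.assoc)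
          finally show "dist (zz m t) (z t) < e" .
        qed
      qed
    qed
  qed
  have hzc: "continuous_on Iv (h z)" by (rule hcont[OF zcont])
  have hzbd: "\<And>s. s \<in> Iv \<Longrightarrow> nrm (h z s) \<le> Lp * (\<kappa> * \<epsilon>) + \<epsilon>" using hbound zbd by blast
  have fixed: "G (h z) t = z t" if t: "t \<in> Iv" for t
  proof -
    have le: "nrm (G (h z) t - z t) \<le> 2 * (\<kappa> * \<epsilon>) * q ^ m" for m
    proof -
      have hc2: "continuous_on Iv (h (zz m))" using hcont zc by blast
      have "G (h z) t - zz (Suc m) t = G (\<lambda>s. h z s - h (zz m) s) t"
        unfolding zzS by (rule G_diff[OF hzc hzbd hc2 hzb t])
      moreover have "nrm (G (\<lambda>s. h z s - h (zz m) s) t) \<le> ce * (Lp * (\<kappa> * \<epsilon> * q ^ m))"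
      proof -
        have b: "nrm (h z s - h (zz m) s) \<le> Lp * (\<kappa> * \<epsilon> * q ^ m)" if "s \<in> Iv" for s
        proof -
          have "nrm (h z s - h (zz m) s) \<le> Lp * nrm (z s - zz m s)"
            by (rule hdiff[of s z "zz m", OF that zbd[OF that] zb[OF that]])
          also have "\<dots> \<le> Lp * (\<kappa> * \<epsilon> * q ^ m)" using ztail[OF that] Lp(1) by (intro mult_left_mono) auto
          finally show ?thesis .
        qed
        show ?thesis using G_bound[OF continuous_on_diff[OF hzc hc2] b t, unfolded cb] .
      qed
      ultimately have a: "nrm (G (h z) t - zz (Suc m) t) \<le> ce * (Lp * (\<kappa> * \<epsilon> * q ^ m))" by simp
      have b: "nrm (zz (Suc m) t - z t) \<le> \<kappa> * \<epsilon> * q ^ Suc m"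
        using ztail[OF t, of "Suc m"] by (simp add: nrm_minus_comm)
      have "nrm (G (h z) t - z t) \<le> ce * (Lp * (\<kappa> * \<epsilon> * q ^ m)) + \<kappa> * \<epsilon> * q ^ Suc m"
        using nrm_tri_diff[of "G (h z) t" "z t" "zz (Suc m) t"] a b by linarith
      also have "\<dots> = 2 * (\<kappa> * \<epsilon>) * q ^ Suc m" unfolding q_def by (simp add: algebra_simps)
      also have "\<dots> \<le> 2 * (\<kappa> * \<epsilon>) * q ^ m" using q0 q1 k0 eps by (intro mult_left_mono power_decreasing) auto
      finally show ?thesis .
    qed
    have "nrm (G (h z) t - z t) \<le> 0"
    proof (rule LIMSEQ_le_const)
      show "(\<lambda>m. 2 * (\<kappa> * \<epsilon>) * q ^ m) \<longlonglongrightarrow> 0" using tendsto_mult[OF tendsto_const qlim, of "2 * (\<kappa> * \<epsilon>)"] by simp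
      show "\<exists>N. \<forall>n\<ge>N. nrm (G (h z) t - z t) \<le> 2 * (\<kappa> * \<epsilon>) * q ^ n" using le by blast
    qed
    then have "nrm (G (h z) t - z t) = 0" using nrm_nonneg by (meson order_antisym)
    then show ?thesis using nrm_eq0 by simp
  qed
  define x where "x t = y t + z t" for t
  have "is_solution (\<lambda>t x. A t *v x + f t x) \<tau> x" unfolding is_solution_def
  proof
    fix t assume t: "t \<in> Ivl \<tau>"
    have dz: "(z has_vector_derivative A t *v z t + h z t) (at t within Iv)"
    proof (rule has_vector_derivative_transform_within[OF _ zero_less_one t])
      show "(G (h z) has_vector_derivative A t *v z t + h z t) (at t within Iv)"
        using G_deriv[OF hzc t] fixed[OF t] by simp
      show "G (h z) x' = z x'" if "x' \<in> Iv" "dist x' t < 1" for x' using fixed that by blast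
    qed
    have "(x has_vector_derivative y' t + (A t *v z t + h z t)) (at t within Iv)"
      unfolding x_def by (rule has_vector_derivative_add[OF dy[OF t] dz])
    moreover have "y' t + (A t *v z t + h z t) = A t *v x t + f t (x t)"
      unfolding x_def h_def g_def by (simp add: matrix_vector_right_distrib algebra_simps)
    ultimately show "(x has_vector_derivative A t *v x t + f t (x t)) (at t within Ivl \<tau>)" by simp
  qed
  moreover have "\<forall>t\<in>Iv. nrm (x t - y t) \<le> (2 * N / lam) / (1 - 2 * N / lam * Lp) * \<epsilon>"
    using zbd unfolding x_def \<kappa>_def q_def ce_def by simp
  ultimately show ?thesis by blast
qed

end


theorem mainTheorem5:
  fixes nrm :: "real^'n \<Rightarrow> real"
    and A :: "real \<Rightarrow> real^'n^'n"
    and f :: "real \<Rightarrow> real^'n \<Rightarrow> real^'n"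
    and ft :: "real \<Rightarrow> real^'n \<Rightarrow> real^'n"
    and fx :: "real \<Rightarrow> real^'n \<Rightarrow> real^'n^'n"
    and N lam :: real and k :: nat and L :: "nat \<Rightarrow> real" and \<rho> :: real
  assumes "is_norm nrm"
    and "continuous_on {0..} A"
    and "N > 0" and "lam > 0"
    and "exp_dichotomy nrm A N lam"
    and "C1_with_partials f ft fx"
    and "\<forall>j\<in>{1..k+1}. L j \<ge> 0"
    and "L 1 < lam / (2 * N)"
    and "\<forall>t\<ge>0. \<forall>x. mat_norm nrm (fx t x) \<le> (\<Sum>j=1..k+1. L j * nrm x ^ (j - 1))"
    and "\<rho> > 0"
    and "(\<Sum>j=1..k+1. L j * \<rho> ^ (j - 1)) < lam / (2 * N)"
  shows "cond_lip_shadowing nrm (\<lambda>t x. A t *v x + f t x) {y. nrm y \<le> \<rho>}"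
proof -
  note isn = assms(1) and contA = assms(2) and Npos = assms(3) and lampos = assms(4)
    and ed = assms(5) and C1 = assms(6) and Lnn = assms(7) and fxb = assms(9) and rho = assms(10)
    and Lrho = assms(11)
  interpret nrmloc nrm by (rule nrmloc.intro[OF isn])
  obtain T P where tm: "transition_matrix A T"
    and comm: "\<forall>t s. 0 \<le> t \<and> 0 \<le> s \<longrightarrow> P t ** T t s = T t s ** P s"
    and bP: "\<forall>t s. 0 \<le> s \<and> s \<le> t \<longrightarrow> mat_norm nrm (T t s ** P s) \<le> N * exp (- lam * (t - s))"
    and bQ: "\<forall>t s. 0 \<le> t \<and> t \<le> s \<longrightarrow> mat_norm nrm (T t s ** (mat 1 - P s)) \<le> N * exp (- lam * (s - t))"
    using ed unfolding exp_dichotomy_def by blast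
  define Lip where "Lip R = (\<Sum>j=1..k+1. L j * R ^ (j - 1))" for R :: real
  define M where "M = lam / (2 * N)"
  have "isCont Lip \<rho>" unfolding Lip_def by (intro continuous_intros)
  then have "\<forall>\<^sub>F x in at \<rho>. Lip x < M"
    using Lrho unfolding Lip_def M_def isCont_def by (intro order_tendstoD(2)) auto
  then obtain d where d: "d > 0" "\<And>x. x \<noteq> \<rho> \<Longrightarrow> dist x \<rho> < d \<Longrightarrow> Lip x < M"
    unfolding eventually_at by auto
  define \<delta> where "\<delta> = d / 2"
  have \<delta>: "\<delta> > 0" unfolding \<delta>_def using d by simp
  define R where "R = \<rho> + \<delta>"
  define Lp where "Lp = Lip R"
  have LpM: "Lp < M" unfolding Lp_def R_def using d(2)[of "\<rho> + \<delta>"] \<delta> d(1) unfolding \<delta>_def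
    by (simp add: dist_real_def)
  have Lp0: "Lp \<ge> 0" unfolding Lp_def Lip_def R_def using Lnn rho \<delta>
    by (intro sum_nonneg) auto
  have Lp2: "2 * N * Lp < lam" using LpM Npos unfolding M_def by (simp add: field_simps)
  have fxR: "mat_norm nrm (fx t x) \<le> Lp" if "t \<ge> 0" "nrm x \<le> R" for t x
  proof -
    have "mat_norm nrm (fx t x) \<le> (\<Sum>j=1..k+1. L j * nrm x ^ (j - 1))" using fxb that by blast
    also have "\<dots> \<le> Lp" unfolding Lp_def Lip_def
      using Lnn that by (intro sum_mono mult_left_mono power_mono) auto
    finally show ?thesis .
  qed
  have C1': "\<forall>t\<ge>0. \<forall>x. ((\<lambda>p. f (fst p) (snd p)) has_derivative
                    (\<lambda>h. fst h *\<^sub>R ft t x + fx t x *v snd h)) (at (t, x) within {0..} \<times> UNIV)"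
    using C1 unfolding C1_with_partials_def by blast
  have flip: "nrm (f t a - f t b) \<le> Lp * nrm (a - b)" if "t \<ge> 0" "nrm a \<le> R" "nrm b \<le> R" for t a b
    by (rule f_lip[OF C1' fxR[OF that(1)] that])
  have fcont: "continuous_on ({0..} \<times> UNIV) (\<lambda>p. f (fst p) (snd p))"
    unfolding continuous_on_eq_continuous_within
  proof
    fix p :: "real \<times> (real^'n)" assume "p \<in> {0..} \<times> UNIV"
    then have "fst p \<ge> 0" by auto
    then have "((\<lambda>p. f (fst p) (snd p)) has_derivative
                    (\<lambda>h. fst h *\<^sub>R ft (fst p) (snd p) + fx (fst p) (snd p) *v snd h)) (at (fst p, snd p) within {0..} \<times> UNIV)"
      using C1' by blast
    then show "continuous (at p within {0..} \<times> UNIV) (\<lambda>p. f (fst p) (snd p))"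
      using has_derivative_continuous by fastforce
  qed
  define \<kappa> where "\<kappa> = (2 * N / lam) / (1 - 2 * N / lam * Lp)"
  have q1: "2 * N / lam * Lp < 1" using Lp2 lampos by (simp add: field_simps)
  have k0: "\<kappa> > 0" unfolding \<kappa>_def using q1 Npos lampos by simp
  define eps0 where "eps0 = \<delta> / \<kappa>"
  have e0: "eps0 > 0" unfolding eps0_def using \<delta> k0 by simp
  have main: "\<exists>x. is_solution (\<lambda>t x. A t *v x + f t x) \<tau> x \<and> (\<forall>t\<in>Ivl \<tau>. nrm (x t - y t) \<le> \<kappa> * eps)"
    if eps: "eps > 0" "eps \<le> eps0" and tau: "\<tau> > 0"
      and ps: "pseudosolution nrm (\<lambda>t x. A t *v x + f t x) \<tau> y eps"
      and yb: "\<And>t. t \<in> Ivl \<tau> \<Longrightarrow> nrm (y t) \<le> \<rho>" for eps \<tau> y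
  proof -
    from ps obtain y' where dy: "\<forall>t\<in>Ivl \<tau>. (y has_vector_derivative y' t) (at t within Ivl \<tau>)"
      and cy': "continuous_on (Ivl \<tau>) y'"
      and pe: "\<forall>t\<in>Ivl \<tau>. nrm (y' t - (A t *v y t + f t (y t))) \<le> eps"
      unfolding pseudosolution_def by blast
    interpret gre nrm A N lam T P \<tau>
      by (intro gre.intro dich.intro dich_axioms.intro gre_axioms.intro nrmloc.intro isn contA Npos lampos tm comm bP bQ tau)
    have small: "\<kappa> * eps + \<rho> \<le> R"
    proof -
      have "\<kappa> * eps \<le> \<kappa> * eps0" using eps k0 by (intro mult_left_mono) auto
      also have "\<dots> = \<delta>" unfolding eps0_def using k0 by simp
      finally show ?thesis unfolding R_def by simp
    qed
    have "\<exists>x. is_solution (\<lambda>t x. A t *v x + f t x) \<tau> x \<and>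
             (\<forall>t\<in>Ivl \<tau>. nrm (x t - y t) \<le> (2 * N / lam) / (1 - 2 * N / lam * Lp) * eps)"
      by (rule shadow_core[OF fcont flip Lp0 Lp2 eps(1) small[unfolded \<kappa>_def]])
         (use dy cy' pe yb in auto)
    then show "\<exists>x. is_solution (\<lambda>t x. A t *v x + f t x) \<tau> x \<and> (\<forall>t\<in>Ivl \<tau>. nrm (x t - y t) \<le> \<kappa> * eps)"
      unfolding \<kappa>_def .
  qed
  show ?thesis unfolding cond_lip_shadowing_def
    by (intro exI[of _ eps0] exI[of _ \<kappa>] conjI e0 k0 allI impI main) auto
qed


end
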